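(* Let $q\ge3$ be a prime power, $\tau\ge0$, and $\epsilon\in(0,1)$ small. Let $(\hat\gamma,\hat\kappa)$, with $\hat\gamma\in[0,q-1)$, $\hat\kappa\in[0,\frac{q-1}{q})$ and $\hat\gamma+\hat\kappa=\tau$, maximize $(2\gamma-\kappa+1)H_q\!\left(\frac{\gamma}{2\gamma-\kappa+1}\right)-\gamma\log_q(q-1)+H_q(\kappa)$ over $\gamma\in[0,q-1)$, $\kappa\in[0,\frac{q-1}{q})$ with $\gamma+\kappa=\tau$. Then for all sufficiently large $n$, with probability at least $1-q^{-n}$, a random $\mathbb{F}_q$-linear insdel code $\mathcal{C}\subseteq\mathbb{F}_q^n$ of rate $$R=1-(2\hat\gamma-\hat\kappa+1)H_q\!\left(\frac{\hat\gamma}{2\hat\gamma-\hat\kappa+1}\right)+\hat\gamma\log_q(q-1)-H_q(\hat\kappa)-\epsilon$$ is $(\tau n,\exp(O(1/\epsilon)))$-list-decodable.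
   Context: The alphabet is the finite field $\mathbb{F}_q$. The insdel distance $d(\mathbf a,\mathbf b)$ between words (lengths may differ) is the minimum number of single-symbol insertions and deletions needed to transform $\mathbf a$ into $\mathbf b$. For $\mathbf u\in\mathbb{F}_q^n$ and real $z\ge0$, $\mathcal{B}(\mathbf u,z)=\{\mathbf v\in\bigcup_{i=\max\{n-z,0\}}^{n+z}\mathbb{F}_q^i: d(\mathbf u,\mathbf v)\le z\}$. A code $\mathcal{C}\subseteq\mathbb{F}_q^n$ is $(\tau n,L)$-list-decodable if for every nonnegative integer $m\in[\max(0,n-\tau n),n+\tau n]$ and every $\mathbf r\in\mathbb{F}_q^m$, $|\mathcal{B}(\mathbf r,\tau n)\cap\mathcal{C}|\le L$. A random $\mathbb{F}_q$-linear code of rate $R$ is the $\mathbb{F}_q$-span of $Rn$ linearly independent vectors chosen uniformly at random from $\mathbb{F}_q^n$. $H_q(x)=x\log_q(q-1)-x\log_qx-(1-x)\log_q(1-x)$ for $0<x<1$, $H_q(0)=H_q(1)=0$. *)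

theory Defs
  imports Complex_Main "HOL-Library.Cardinality"
begin

definition insdel_step :: "'a list \<Rightarrow> 'a list \<Rightarrow> bool" where
  "insdel_step a b \<longleftrightarrow>
     (\<exists>xs ys x. b = xs @ x # ys \<and> a = xs @ ys) \<or>
     (\<exists>xs ys x. a = xs @ x # ys \<and> b = xs @ ys)"

definition insdel_dist :: "'a list \<Rightarrow> 'a list \<Rightarrow> nat" where
  "insdel_dist a b = (LEAST k. (insdel_step ^^ k) a b)"

definition insdel_ball :: "'a list \<Rightarrow> real \<Rightarrow> 'a list set" where
  "insdel_ball u z = {v. max (real (length u) - z) 0 \<le> real (length v) \<and>
                          real (length v) \<le> real (length u) + z \<and>
                          real (insdel_dist u v) \<le> z}"

definition list_decodable :: "nat \<Rightarrow> 'a list set \<Rightarrow> real \<Rightarrow> real \<Rightarrow> bool" where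
  "list_decodable n C tau L \<longleftrightarrow>
     (\<forall>m::nat. \<forall>r::'a list.
        max 0 (real n - tau * real n) \<le> real m \<and> real m \<le> real n + tau * real n \<and>
        length r = m \<longrightarrow> real (card (insdel_ball r (tau * real n) \<inter> C)) \<le> L)"

definition Hq :: "real \<Rightarrow> real \<Rightarrow> real" where
  "Hq q x = (if x = 0 \<or> x = 1 then 0
             else x * log q (q - 1) - x * log q x - (1 - x) * log q (1 - x))"

definition vadd :: "'a::field list \<Rightarrow> 'a list \<Rightarrow> 'a list" where
  "vadd u v = map2 (+) u v"

definition lincomb :: "nat \<Rightarrow> 'a::field list list \<Rightarrow> 'a list \<Rightarrow> 'a list" where
  "lincomb n vs cs = foldr vadd (map2 (\<lambda>c v. map ((*) c) v) cs vs) (replicate n 0)"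

definition lin_span :: "nat \<Rightarrow> 'a::field list list \<Rightarrow> 'a list set" where
  "lin_span n vs = {lincomb n vs cs | cs. length cs = length vs}"

definition lin_indep :: "nat \<Rightarrow> 'a::field list list \<Rightarrow> bool" where
  "lin_indep n vs \<longleftrightarrow>
     (\<forall>cs. length cs = length vs \<and> lincomb n vs cs = replicate n 0 \<longrightarrow> set cs \<subseteq> {0})"

text \<open>Sample space of a random linear code of dimension k in F_q^n: ordered k-tuples of
  linearly independent vectors, each tuple equally likely (uniform sampling conditioned on
  independence).\<close>
definition indep_tuples :: "nat \<Rightarrow> nat \<Rightarrow> 'a::field list list set" where
  "indep_tuples n k = {vs. length vs = k \<and> (\<forall>v\<in>set vs. length v = n) \<and> lin_indep n vs}"

definition insdel_obj :: "real \<Rightarrow> real \<Rightarrow> real \<Rightarrow> real" where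
  "insdel_obj q g k = (2*g - k + 1) * Hq q (g / (2*g - k + 1)) - g * log q (q - 1) + Hq q k"

end

theory Submission
  imports Defs "HOL-Library.Sublist" "HOL-Real_Asymp.Real_Asymp"
begin


definition lc :: "nat \<Rightarrow> 'a::field list list \<Rightarrow> 'a list \<Rightarrow> 'a list" where
  "lc n vs c = map (\<lambda>p. \<Sum>i<length c. c!i * vs!i!p) [0..<n]"

definition indep_fam :: "nat \<Rightarrow> nat set \<Rightarrow> (nat \<Rightarrow> 'a::field list) \<Rightarrow> bool" where
  "indep_fam k I c \<longleftrightarrow> (\<forall>d. (\<forall>p<k. (\<Sum>i\<in>I. d i * c i ! p) = 0) \<longrightarrow> (\<forall>i\<in>I. d i = 0))"

definition tuples :: "nat \<Rightarrow> nat \<Rightarrow> 'a list list set" where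
  "tuples n k = {vs. length vs = k \<and> (\<forall>v\<in>set vs. length v = n)}"

lemma length_lc[simp]: "length (lc n vs c) = n" by (simp add: lc_def)

lemma nth_lc: "p < n \<Longrightarrow> lc n vs c ! p = (\<Sum>i<length c. c!i * vs!i!p)"
  by (simp add: lc_def)

lemma lc_Cons: "p < n \<Longrightarrow> lc n (v#vs) (a#c) ! p = a * v!p + lc n vs c ! p"
  by (simp only: nth_lc length_Cons sum.lessThan_Suc_shift) simp

lemma lincomb_eq_lc:
  "length cs = length vs \<Longrightarrow> \<forall>v\<in>set vs. length v = n \<Longrightarrow> lincomb n vs cs = lc n vs cs"
proof (induction vs arbitrary: cs)
  case Nil
  then show ?case by (simp add: lincomb_def lc_def map_replicate_const)
next
  case (Cons v vs)
  then obtain a c where cs: "cs = a # c" by (cases cs) auto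
  have IH: "lincomb n vs c = lc n vs c" using Cons cs by auto
  have "lincomb n (v#vs) (a#c) = vadd (map ((*) a) v) (lincomb n vs c)"
    by (simp add: lincomb_def)
  also have "\<dots> = lc n (v#vs) (a#c)"
    using Cons.prems by (intro nth_equalityI) (auto simp: IH vadd_def lc_Cons)
  finally show ?case using cs by simp
qed

lemma finite_vecs[simp]: "finite {xs :: 'a::finite list. length xs = n}"
  using finite_lists_length_eq[of "UNIV::'a set" n] by simp

lemma card_vecs[simp]: "card {xs :: 'a::finite list. length xs = n} = CARD('a) ^ n"
  using card_lists_length_eq[of "UNIV::'a set" n] by simp


lemma lin_span_lc: assumes "\<forall>v\<in>set vs. length v = n"
  shows "lin_span n vs = lc n vs ` {cs. length cs = length vs}"
proof -
  have e: "\<And>cs. length cs = length vs \<Longrightarrow> lincomb n vs cs = lc n vs cs"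
    using lincomb_eq_lc assms by blast
  show ?thesis unfolding lin_span_def image_def
  proof (intro equalityI subsetI)
    fix x assume "x \<in> {lincomb n vs cs |cs. length cs = length vs}"
    then obtain cs where "x = lincomb n vs cs" "length cs = length vs" by blast
    then show "x \<in> {y. \<exists>cs\<in>{cs. length cs = length vs}. y = lc n vs cs}" using e by auto
  next
    fix x assume "x \<in> {y. \<exists>cs\<in>{cs. length cs = length vs}. y = lc n vs cs}"
    then obtain cs where "x = lc n vs cs" "length cs = length vs" by blast
    then have "x = lincomb n vs cs" "length cs = length vs" using e[of cs] by auto
    then show "x \<in> {lincomb n vs cs |cs. length cs = length vs}" by blast
  qed
qed

lemma lin_indep_lc: "\<forall>v\<in>set vs. length v = n \<Longrightarrow>
   lin_indep n vs \<longleftrightarrow> (\<forall>cs. length cs = length vs \<and> lc n vs cs = replicate n 0 \<longrightarrow> set cs \<subseteq> {0})"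
proof -
  assume a: "\<forall>v\<in>set vs. length v = n"
  have e: "\<And>cs. length cs = length vs \<Longrightarrow> lincomb n vs cs = lc n vs cs"
    using lincomb_eq_lc a by blast
  show ?thesis unfolding lin_indep_def
  proof (intro iffI allI impI)
    fix cs assume h: "\<forall>cs. length cs = length vs \<and> lincomb n vs cs = replicate n 0 \<longrightarrow> set cs \<subseteq> {0}"
      and c: "length cs = length vs \<and> lc n vs cs = replicate n 0"
    then show "set cs \<subseteq> {0}" using e[of cs] by metis
  next
    fix cs assume h: "\<forall>cs. length cs = length vs \<and> lc n vs cs = replicate n 0 \<longrightarrow> set cs \<subseteq> {0}"
      and c: "length cs = length vs \<and> lincomb n vs cs = replicate n 0"
    then show "set cs \<subseteq> {0}" using e[of cs] by metis
  qed
qed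

lemma card_lin_span:
  assumes "\<forall>v\<in>set vs. length v = n"
  shows "card (lin_span n (vs :: 'a::{finite,field} list list)) \<le> CARD('a) ^ length vs"
proof -
  have "card (lin_span n vs) \<le> card {cs :: 'a list. length cs = length vs}"
    unfolding lin_span_lc[OF assms] by (rule card_image_le) simp
  then show ?thesis by simp
qed

lemma lin_span_len: "\<forall>v\<in>set vs. length v = n \<Longrightarrow> x \<in> lin_span n vs \<Longrightarrow> length x = n"
  by (auto simp: lin_span_lc)

lemma finite_lin_span[simp]: "\<forall>v\<in>set vs. length v = n \<Longrightarrow> finite (lin_span n (vs :: 'a::{finite,field} list list))"
  by (simp add: lin_span_lc)

lemma lin_indep_Cons:
  fixes v :: "'a::field list"
  assumes vs: "\<forall>v\<in>set vs. length v = n" and v: "length v = n"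
    and ind: "lin_indep n vs" and nsp: "v \<notin> lin_span n vs"
  shows "lin_indep n (v#vs)"
proof -
  have vs': "\<forall>w\<in>set (v#vs). length w = n" using vs v by auto
  show ?thesis unfolding lin_indep_lc[OF vs']
  proof (intro allI impI)
    fix cs :: "'a list"
    assume h: "length cs = length (v#vs) \<and> lc n (v#vs) cs = replicate n 0"
    then obtain d ds where cs: "cs = d # ds" and len: "length ds = length vs" by (cases cs) auto
    have eq: "\<And>p. p < n \<Longrightarrow> d * v!p + lc n vs ds ! p = 0"
    proof -
      fix p assume p: "p < n"
      have "lc n (v#vs) cs ! p = 0" using h p by simp
      then show "d * v!p + lc n vs ds ! p = 0" using lc_Cons[OF p, of v vs d ds] cs by simp
    qed
    have d0: "d = 0"
    proof (rule ccontr)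
      assume dn: "d \<noteq> 0"
      let ?e = "map (\<lambda>x. - x / d) ds"
      have "v = lc n vs ?e"
      proof (rule nth_equalityI)
        show "length v = length (lc n vs ?e)" using v by simp
        fix p assume "p < length v"
        then have p: "p < n" using v by simp
        have "lc n vs ?e ! p = (\<Sum>i<length ds. (- ds!i / d) * vs!i!p)"
          by (simp add: nth_lc p)
        also have "\<dots> = - (\<Sum>i<length ds. ds!i * vs!i!p) / d"
          by (simp add: sum_divide_distrib sum_negf)
        also have "\<dots> = - (lc n vs ds ! p) / d" by (simp add: nth_lc p)
        also have "\<dots> = v ! p"
        proof -
          have "lc n vs ds ! p = - (d * v!p)" using eq[OF p] by (simp add: eq_neg_iff_add_eq_0 add.commute)
          then show ?thesis using dn by simp
        qed
        finally show "v ! p = lc n vs ?e ! p" by simp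
      qed
      then have "v \<in> lin_span n vs" unfolding lin_span_lc[OF vs] using len by auto
      with nsp show False by simp
    qed
    have "lc n vs ds = replicate n 0"
      by (rule nth_equalityI) (use eq d0 in auto)
    then have "set ds \<subseteq> {0}" using ind len unfolding lin_indep_lc[OF vs] by auto
    then show "set cs \<subseteq> {0}" using cs d0 by auto
  qed
qed


lemma tuples_eq: "tuples n k = {vs. set vs \<subseteq> {v. length v = n} \<and> length vs = k}"
  unfolding tuples_def by auto

lemma finite_tuples[simp]: "finite (tuples n k :: 'a::finite list list set)"
  unfolding tuples_eq by (rule finite_lists_length_eq) simp

lemma card_tuples: "card (tuples n k :: 'a::finite list list set) = CARD('a) ^ (n*k)"
  unfolding tuples_eq by (subst card_lists_length_eq) (simp_all add: power_mult)

lemma indep_tuples_sub: "indep_tuples n k \<subseteq> tuples n k"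
  unfolding indep_tuples_def tuples_def by auto

lemma finite_indep_tuples[simp]: "finite (indep_tuples n k :: 'a::{finite,field} list list set)"
  by (rule finite_subset[OF indep_tuples_sub]) simp

lemma card_indep_tuples_step:
  fixes q :: nat
  defines "q \<equiv> CARD('a::{finite,field})"
  assumes i: "i \<le> n"
  shows "card (indep_tuples n i :: 'a list list set) * (q^n - q^i) \<le> card (indep_tuples n (Suc i) :: 'a list list set)"
proof -
  let ?T = "indep_tuples n i :: 'a list list set"
  let ?S = "SIGMA vs:?T. {v. length v = n} - lin_span n vs"
  have inj: "inj_on (\<lambda>(v,vs). v#vs) ((\<lambda>(x,y). (y,x)) ` ?S)" by (auto simp: inj_on_def)
  have sub: "(\<lambda>(v,vs). v#vs) ` ((\<lambda>(x,y). (y,x)) ` ?S) \<subseteq> indep_tuples n (Suc i)"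
  proof
    fix w assume "w \<in> (\<lambda>(v,vs). v#vs) ` ((\<lambda>(x,y). (y,x)) ` ?S)"
    then obtain v vs where w: "w = v#vs" and vs: "vs \<in> ?T" and v: "length v = n" "v \<notin> lin_span n vs"
      by auto
    from vs have vsl: "\<forall>u\<in>set vs. length u = n" "length vs = i" "lin_indep n vs"
      unfolding indep_tuples_def by auto
    show "w \<in> indep_tuples n (Suc i)"
      using lin_indep_Cons[OF vsl(1) v(1) vsl(3) v(2)] vsl v w unfolding indep_tuples_def by auto
  qed
  have fin: "finite ?S" by (intro finite_SigmaI) auto
  have "card ?S = (\<Sum>vs\<in>?T. card ({v. length v = n} - lin_span n vs))"
    by (rule card_SigmaI) auto
  also have "\<dots> \<ge> (\<Sum>vs\<in>?T. q^n - q^i)"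
  proof (rule sum_mono)
    fix vs assume vs: "vs \<in> ?T"
    then have vsl: "\<forall>u\<in>set vs. length u = n" "length vs = i" unfolding indep_tuples_def by auto
    have "card ({v::'a list. length v = n} - lin_span n vs) \<ge> card {v::'a list. length v = n} - card (lin_span n vs)"
      by (rule diff_card_le_card_Diff) (simp add: vsl)
    moreover have "card (lin_span n vs) \<le> q^i" using card_lin_span[OF vsl(1)] vsl(2) q_def by simp
    ultimately show "q^n - q^i \<le> card ({v. length v = n} - lin_span n vs)" by (simp add: q_def)
  qed
  finally have "card ?T * (q^n - q^i) \<le> card ?S" by simp
  also have "card ?S = card ((\<lambda>(x,y). (y,x)) ` ?S)" by (rule card_image[symmetric]) (auto simp: inj_on_def)
  also have "\<dots> = card ((\<lambda>(v,vs). v#vs) ` ((\<lambda>(x,y). (y,x)) ` ?S))" by (rule card_image[symmetric, OF inj])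
  also have "\<dots> \<le> card (indep_tuples n (Suc i) :: 'a list list set)" by (rule card_mono[OF _ sub]) simp
  finally show ?thesis .
qed

lemma card_indep_tuples_ge:
  fixes q :: real
  defines "q \<equiv> real CARD('a::{finite,field})"
  assumes i: "i \<le> n"
  shows "real (card (indep_tuples n i :: 'a list list set)) \<ge> q^(n*i) * (1 - (\<Sum>j<i. q^j) / q^n)"
  using i
proof (induction i)
  case 0
  have "(indep_tuples n 0 :: 'a list list set) = {[]}" by (auto simp: indep_tuples_def lin_indep_def)
  then show ?case by simp
next
  case (Suc i)
  have q1: "q \<ge> 1" unfolding q_def by (simp add: Suc_leI)
  have qn: "q^n > 0" using q1 by simp
  have IH: "real (card (indep_tuples n i :: 'a list list set)) \<ge> q^(n*i) * (1 - (\<Sum>j<i. q^j) / q^n)"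
    using Suc by simp
  have le: "q^i \<le> q^n" using q1 Suc.prems by (simp add: power_increasing)
  have st: "real (card (indep_tuples n i :: 'a list list set)) * (q^n - q^i) \<le> real (card (indep_tuples n (Suc i) :: 'a list list set))"
  proof -
    have "card (indep_tuples n i :: 'a list list set) * (CARD('a)^n - CARD('a)^i) \<le> card (indep_tuples n (Suc i) :: 'a list list set)"
      using card_indep_tuples_step[of i n] Suc.prems by simp
    then have "real (card (indep_tuples n i :: 'a list list set) * (CARD('a)^n - CARD('a)^i)) \<le> real (card (indep_tuples n (Suc i) :: 'a list list set))"
      by linarith
    moreover have "CARD('a)^i \<le> CARD('a)^n" using Suc.prems by (simp add: power_increasing)
    ultimately show ?thesis by (simp add: q_def of_nat_diff)
  qed
  let ?a = "(\<Sum>j<i. q^j) / q^n" and ?b = "q^i / q^n"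
  have a0: "?a \<ge> 0" using q1 by (simp add: sum_nonneg)
  have b0: "?b \<ge> 0" using q1 by simp
  have "q^(n * Suc i) * (1 - (\<Sum>j<Suc i. q^j) / q^n) = q^(n*i) * q^n * (1 - ?a - ?b)"
    by (simp add: power_add add_divide_distrib algebra_simps)
  also have "\<dots> \<le> q^(n*i) * q^n * ((1 - ?a) * (1 - ?b))"
  proof (intro mult_left_mono)
    have g: "\<And>x y::real. (1-x)*(1-y) = 1-x-y+x*y" by (simp add: algebra_simps)
    show "1 - ?a - ?b \<le> (1 - ?a) * (1 - ?b)" unfolding g using mult_nonneg_nonneg[OF a0 b0] by linarith
  qed (use q1 in auto)
  also have "\<dots> = (q^(n*i) * (1 - ?a)) * (q^n * (1 - ?b))" by (simp only: ac_simps)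
  also have "q^n * (1 - ?b) = q^n - q^i" using qn by (simp add: right_diff_distrib del: power_eq_0_iff)
  also have "(q^(n*i) * (1 - ?a)) * (q^n - q^i) \<le> real (card (indep_tuples n i :: 'a list list set)) * (q^n - q^i)"
    using IH le by (intro mult_right_mono) auto
  also have "\<dots> \<le> real (card (indep_tuples n (Suc i) :: 'a list list set))" by (rule st)
  finally show ?case .
qed



lemma indep_fam_mono:
  assumes "indep_fam k {..<s} c" "t \<le> s" shows "indep_fam k {..<t} c"
  unfolding indep_fam_def
proof (intro allI impI ballI)
  fix d i assume H: "\<forall>p<k. (\<Sum>i\<in>{..<t}. d i * c i ! p) = 0" and i: "i \<in> {..<t}"
  let ?d = "\<lambda>i. if i < t then d i else 0"
  have "\<forall>p<k. (\<Sum>i\<in>{..<s}. ?d i * c i ! p) = 0"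
  proof (intro allI impI)
    fix p assume p: "p < k"
    have "(\<Sum>i\<in>{..<s}. ?d i * c i ! p) = (\<Sum>i\<in>{..<t}. ?d i * c i ! p)"
      using assms(2) by (intro sum.mono_neutral_right) auto
    also have "\<dots> = (\<Sum>i\<in>{..<t}. d i * c i ! p)" by simp
    finally show "(\<Sum>i\<in>{..<s}. ?d i * c i ! p) = 0" using H p by simp
  qed
  then have "\<forall>j\<in>{..<s}. ?d j = 0" using assms(1) unfolding indep_fam_def by (elim allE[of _ ?d]) simp
  then have "?d i = 0" using assms(2) i by (meson lessThan_iff order_less_le_trans)
  then show "d i = 0" using i by simp
qed

lemma indep_fam_Cons:
  fixes y :: "'a::field list"
  assumes cs: "\<forall>c\<in>set cs. length c = k" and y: "length y = k"
    and ind: "indep_fam k {..<length cs} ((!) cs)"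
    and nsp: "y \<notin> lc k cs ` {d. length d = length cs}"
  shows "indep_fam k {..<length (y#cs)} ((!) (y#cs))"
  unfolding indep_fam_def
proof (intro allI impI)
  fix d assume H: "\<forall>p<k. (\<Sum>i\<in>{..<length (y#cs)}. d i * (y#cs) ! i ! p) = 0"
  have H': "\<And>p. p < k \<Longrightarrow> d 0 * y!p + (\<Sum>i<length cs. d (Suc i) * cs!i!p) = 0"
  proof -
    fix p assume p: "p < k"
    have "(\<Sum>i\<in>{..<length (y#cs)}. d i * (y#cs) ! i ! p) = d 0 * y!p + (\<Sum>i<length cs. d (Suc i) * cs!i!p)"
      by (simp only: length_Cons sum.lessThan_Suc_shift) simp
    then show "d 0 * y!p + (\<Sum>i<length cs. d (Suc i) * cs!i!p) = 0" using H p by simp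
  qed
  have d0: "d 0 = 0"
  proof (rule ccontr)
    assume dn: "d 0 \<noteq> 0"
    let ?e = "map (\<lambda>i. - d (Suc i) / d 0) [0..<length cs]"
    have "y = lc k cs ?e"
    proof (rule nth_equalityI)
      show "length y = length (lc k cs ?e)" using y by simp
      fix p assume "p < length y"
      then have p: "p < k" using y by simp
      have "lc k cs ?e ! p = (\<Sum>i<length cs. (- d (Suc i) / d 0) * cs!i!p)"
        by (simp add: nth_lc p)
      also have "\<dots> = - (\<Sum>i<length cs. d (Suc i) * cs!i!p) / d 0"
        by (simp add: sum_divide_distrib sum_negf)
      also have "\<dots> = y ! p"
      proof -
        have "(\<Sum>i<length cs. d (Suc i) * cs!i!p) = - (d 0 * y!p)" using H'[OF p]
          by (simp add: eq_neg_iff_add_eq_0 add.commute)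
        then show ?thesis using dn by simp
      qed
      finally show "y ! p = lc k cs ?e ! p" by simp
    qed
    then have "y \<in> lc k cs ` {d. length d = length cs}" by auto
    with nsp show False by simp
  qed
  have "\<forall>p<k. (\<Sum>i\<in>{..<length cs}. d (Suc i) * cs ! i ! p) = 0" using H' d0 by simp
  then have dS: "\<forall>i<length cs. d (Suc i) = 0" using ind unfolding indep_fam_def
    by (elim allE[of _ "\<lambda>i. d (Suc i)"]) simp
  show "\<forall>i\<in>{..<length (y#cs)}. d i = 0"
  proof
    fix i assume "i \<in> {..<length (y#cs)}"
    then show "d i = 0" using d0 dS by (cases i) auto
  qed
qed

lemma greedy_indep:
  fixes Y :: "'a::{finite,field} list set"
  assumes t: "t \<ge> 1" and Y: "Y \<subseteq> {c. length c = k}" and big: "card Y > CARD('a)^(t-1)"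
  shows "\<exists>cs. length cs = t \<and> set cs \<subseteq> Y \<and> indep_fam k {..<t} ((!) cs)"
proof -
  define P where "P = (\<lambda>cs::'a list list. set cs \<subseteq> Y \<and> indep_fam k {..<length cs} ((!) cs) \<and> length cs \<le> t)"
  define Q where "Q = (\<lambda>l. \<exists>cs. length cs = l \<and> P cs)"
  have "Q 0" unfolding Q_def P_def indep_fam_def by (intro exI[of _ "[]"]) auto
  moreover have "\<forall>l. Q l \<longrightarrow> l \<le> t" unfolding Q_def P_def by auto
  ultimately have fin: "finite {l. Q l}" and ne: "{l. Q l} \<noteq> {}"
    by (auto intro: finite_subset[of _ "{..t}"])
  define s where "s = Max {l. Q l}"
  have Qs: "Q s" using Max_in[OF fin ne] s_def by simp
  have smax: "\<forall>l. Q l \<longrightarrow> l \<le> s" using Max_ge[OF fin] s_def by simp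
  obtain cs where cs: "length cs = s" "P cs" using Qs unfolding Q_def by auto
  show ?thesis
  proof (cases "s = t")
    case True
    then show ?thesis using cs unfolding P_def by auto
  next
    case False
    then have st: "s < t" using cs unfolding P_def by auto
    have csl: "\<forall>c\<in>set cs. length c = k" using cs Y unfolding P_def by auto
    have "Y \<subseteq> lc k cs ` {d. length d = length cs}"
    proof
      fix y assume yY: "y \<in> Y"
      show "y \<in> lc k cs ` {d. length d = length cs}"
      proof (rule ccontr)
        assume nsp: "y \<notin> lc k cs ` {d. length d = length cs}"
        have "P (y#cs)" using indep_fam_Cons[OF csl _ _ nsp] yY Y cs st unfolding P_def by auto
        then have "Q (Suc s)" unfolding Q_def using cs by (intro exI[of _ "y#cs"]) auto
        then show False using smax by auto
      qed
    qed
    then have "card Y \<le> card (lc k cs ` {d. length d = length cs})" by (intro card_mono) auto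
    also have "\<dots> \<le> card {d::'a list. length d = length cs}" by (intro card_image_le) simp
    also have "\<dots> = CARD('a)^s" using cs by simp
    also have "\<dots> \<le> CARD('a)^(t-1)" using st by (intro power_increasing) auto
    finally show ?thesis using big by simp
  qed
qed



definition addv :: "'a::field list \<Rightarrow> 'a list \<Rightarrow> 'a list" where
  "addv x y = map2 (+) x y"
definition smul :: "'a::field \<Rightarrow> 'a list \<Rightarrow> 'a list" where
  "smul a x = map ((*) a) x"

lemma lc_sub:
  assumes "length ci = k" "length cs = k" "p < n"
  shows "lc n vs (map (\<lambda>j. ci!j - al * cs!j) [0..<k]) ! p = lc n vs ci ! p - al * lc n vs cs ! p"
  using assms by (simp add: nth_lc algebra_simps sum_subtractf sum_distrib_left)

lemma indep_fam_empty_k0: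
  assumes "indep_fam 0 I c" shows "I = {}"
proof (rule ccontr)
  assume "I \<noteq> {}"
  then obtain i where i: "i \<in> I" by auto
  have "(\<lambda>j. if j = i then (1::'a) else 0) i = 0"
    using assms i unfolding indep_fam_def by (elim allE[of _ "\<lambda>j. if j = i then (1::'a) else 0"]) auto
  then show False by simp
qed

lemma tuples_Suc: "tuples n (Suc k) = (\<lambda>(v,vs). v#vs) ` ({v. length v = n} \<times> tuples n k)"
proof (intro equalityI subsetI)
  fix x assume "x \<in> tuples n (Suc k)"
  then obtain v vs where "x = v#vs" "length v = n" "vs \<in> tuples n k"
    unfolding tuples_def by (cases x) auto
  then show "x \<in> (\<lambda>(v,vs). v#vs) ` ({v. length v = n} \<times> tuples n k)" by force
next
  fix x assume "x \<in> (\<lambda>(v,vs). v#vs) ` ({v. length v = n} \<times> tuples n k)"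
  then show "x \<in> tuples n (Suc k)" unfolding tuples_def by auto
qed

lemma count_lemma:
  fixes c :: "nat \<Rightarrow> 'a::{finite,field} list" and B :: "nat \<Rightarrow> 'a list set"
  assumes "finite I" "\<forall>i\<in>I. length (c i) = k" "indep_fam k I c" "\<forall>i\<in>I. B i \<subseteq> {x. length x = n}"
  shows "card {vs \<in> tuples n k. \<forall>i\<in>I. lc n vs (c i) \<in> B i} * CARD('a)^(n * card I)
           \<le> (\<Prod>i\<in>I. card (B i)) * CARD('a)^(n*k)"
  using assms
proof (induction k arbitrary: I c B)
  case 0
  then have I: "I = {}" using indep_fam_empty_k0 by blast
  have "tuples n 0 = {[]}" unfolding tuples_def by auto
  then have "{vs \<in> tuples n 0. \<forall>i\<in>I. lc n vs (c i) \<in> B i} \<subseteq> {[]}" by auto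
  then have "card {vs \<in> tuples n 0. \<forall>i\<in>I. lc n vs (c i) \<in> B i} \<le> card {[]::'a list list}"
    by (intro card_mono) auto
  then have "card {vs \<in> tuples n 0. \<forall>i\<in>I. lc n vs (c i) \<in> B i} \<le> 1" by simp
  then show ?case using I by simp
next
  case (Suc k)
  let ?q = "CARD('a)"
  define a where "a i = hd (c i)" for i
  define c' where "c' i = tl (c i)" for i
  have cdec: "\<And>i. i \<in> I \<Longrightarrow> c i = a i # c' i \<and> length (c' i) = k"
    using Suc.prems(2) unfolding a_def c'_def by (metis Suc_length_conv list.sel(1) list.sel(3))
  have lcv: "\<And>i v vs' p. i \<in> I \<Longrightarrow> p < n \<Longrightarrow> lc n (v#vs') (c i) ! p = a i * v!p + lc n vs' (c' i) ! p"
    using cdec lc_Cons by metis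
  let ?S = "{vs \<in> tuples n (Suc k). \<forall>i\<in>I. lc n vs (c i) \<in> B i}"
  show ?case
  proof (cases "\<forall>i\<in>I. a i = 0")
    case True
    let ?S' = "{vs \<in> tuples n k. \<forall>i\<in>I. lc n vs (c' i) \<in> B i}"
    have ind': "indep_fam k I c'"
      unfolding indep_fam_def
    proof (intro allI impI)
      fix d assume H: "\<forall>p<k. (\<Sum>i\<in>I. d i * c' i ! p) = 0"
      have "\<forall>p<Suc k. (\<Sum>i\<in>I. d i * c i ! p) = 0"
      proof (intro allI impI)
        fix p assume p: "p < Suc k"
        show "(\<Sum>i\<in>I. d i * c i ! p) = 0"
        proof (cases p)
          case 0
          then show ?thesis using True cdec by (simp add: sum.neutral)
        next
          case (Suc p')
          have "(\<Sum>i\<in>I. d i * c i ! p) = (\<Sum>i\<in>I. d i * c' i ! p')"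
            using cdec Suc by (intro sum.cong) auto
          then show ?thesis using H p Suc by simp
        qed
      qed
      then show "\<forall>i\<in>I. d i = 0" using Suc.prems(3) unfolding indep_fam_def by (elim allE[of _ d]) simp
    qed
    have IH: "card ?S' * ?q^(n * card I) \<le> (\<Prod>i\<in>I. card (B i)) * ?q^(n*k)"
      using Suc.IH[of I c' B] Suc.prems cdec ind' by simp
    have Seq: "?S = (\<lambda>(v,vs). v#vs) ` ({v. length v = n} \<times> ?S')"
    proof (intro equalityI subsetI)
      fix x assume x: "x \<in> ?S"
      then obtain v vs where xv: "x = v#vs" "length v = n" "vs \<in> tuples n k"
        unfolding tuples_def by (cases x) auto
      have "\<forall>i\<in>I. lc n vs (c' i) \<in> B i"
      proof
        fix i assume i: "i \<in> I"
        have "lc n x (c i) = lc n vs (c' i)"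
          by (rule nth_equalityI) (use lcv[OF i] True i xv in auto)
        then show "lc n vs (c' i) \<in> B i" using x i by auto
      qed
      then show "x \<in> (\<lambda>(v,vs). v#vs) ` ({v. length v = n} \<times> ?S')" using xv by force
    next
      fix x assume "x \<in> (\<lambda>(v,vs). v#vs) ` ({v. length v = n} \<times> ?S')"
      then obtain v vs where xv: "x = v#vs" "length v = n" "vs \<in> ?S'" by auto
      have "\<forall>i\<in>I. lc n x (c i) \<in> B i"
      proof
        fix i assume i: "i \<in> I"
        have "lc n x (c i) = lc n vs (c' i)"
          by (rule nth_equalityI) (use lcv[OF i] True i xv in auto)
        then show "lc n x (c i) \<in> B i" using xv i by auto
      qed
      then show "x \<in> ?S" using xv unfolding tuples_def by auto
    qed
    have "card ?S = card ({v::'a list. length v = n} \<times> ?S')"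
      unfolding Seq by (rule card_image) (auto simp: inj_on_def)
    also have "\<dots> = ?q^n * card ?S'" by (simp add: card_cartesian_product)
    finally have "card ?S * ?q^(n * card I) = ?q^n * (card ?S' * ?q^(n * card I))" by simp
    also have "\<dots> \<le> ?q^n * ((\<Prod>i\<in>I. card (B i)) * ?q^(n*k))" using IH by simp
    also have "\<dots> = (\<Prod>i\<in>I. card (B i)) * ?q^(n * Suc k)" by (simp add: power_add algebra_simps)
    finally show ?thesis .
  next
    case False
    then obtain s where s: "s \<in> I" "a s \<noteq> 0" by auto
    define I' where "I' = I - {s}"
    define al where "al i = a i / a s" for i
    define c'' where "c'' i = map (\<lambda>j. c' i ! j - al i * c' s ! j) [0..<k]" for i
    define B'' where "B'' b i = {y. length y = n \<and> addv (smul (al i) b) y \<in> B i}" for b i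
    define S'' where "S'' b = {vs \<in> tuples n k. \<forall>i\<in>I'. lc n vs (c'' i) \<in> B'' b i}" for b
    have finI': "finite I'" using Suc.prems(1) I'_def by simp
    have lenc'': "\<forall>i\<in>I'. length (c'' i) = k" unfolding c''_def by simp
    have ind'': "indep_fam k I' c''"
      unfolding indep_fam_def
    proof (intro allI impI)
      fix d assume H: "\<forall>p<k. (\<Sum>i\<in>I'. d i * c'' i ! p) = 0"
      define D where "D i = (if i = s then - (\<Sum>j\<in>I'. d j * al j) else d i)" for i
      have sumI: "\<And>f. (\<Sum>i\<in>I. f i) = f s + (\<Sum>i\<in>I'. f i)"
        using Suc.prems(1) s(1) unfolding I'_def by (simp add: sum.remove)
      have DI': "\<And>f. (\<Sum>i\<in>I'. D i * f i) = (\<Sum>i\<in>I'. d i * f i)"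
        unfolding D_def I'_def by (intro sum.cong) auto
      have "\<forall>p<Suc k. (\<Sum>i\<in>I. D i * c i ! p) = 0"
      proof (intro allI impI)
        fix p assume p: "p < Suc k"
        show "(\<Sum>i\<in>I. D i * c i ! p) = 0"
        proof (cases p)
          case 0
          have "(\<Sum>i\<in>I. D i * c i ! p) = D s * a s + (\<Sum>i\<in>I'. d i * a i)"
            unfolding sumI DI'[of "\<lambda>i. c i ! p"] using cdec s(1) 0
            by (simp add: I'_def)
          also have "\<dots> = 0"
          proof -
            have "(\<Sum>j\<in>I'. d j * al j) * a s = (\<Sum>i\<in>I'. d i * a i)"
              unfolding al_def using s(2) by (simp add: sum_distrib_right)
            then show ?thesis unfolding D_def by simp
          qed
          finally show ?thesis .
        next
          case (Suc p')
          have pk: "p' < k" using p Suc by simp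
          have ci: "\<And>i. i \<in> I \<Longrightarrow> c i ! p = c' i ! p'" using cdec Suc by simp
          have c''i: "\<And>i. i \<in> I' \<Longrightarrow> c' i ! p' = c'' i ! p' + al i * c' s ! p'"
            unfolding c''_def using pk by simp
          have "(\<Sum>i\<in>I. D i * c i ! p) = D s * c' s ! p' + (\<Sum>i\<in>I'. d i * c' i ! p')"
            unfolding sumI DI'[of "\<lambda>i. c i ! p"] using ci s(1) I'_def
            by (simp add: I'_def)
          also have "(\<Sum>i\<in>I'. d i * c' i ! p') = (\<Sum>i\<in>I'. d i * c'' i ! p') + (\<Sum>i\<in>I'. d i * al i) * c' s ! p'"
            by (simp add: c''i sum.distrib sum_distrib_right sum_distrib_left algebra_simps)
          also have "(\<Sum>i\<in>I'. d i * c'' i ! p') = 0" using H pk by simp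
          finally show ?thesis unfolding D_def by simp
        qed
      qed
      then have "\<forall>i\<in>I. D i = 0" using Suc.prems(3) unfolding indep_fam_def by (elim allE[of _ D]) simp
      then show "\<forall>i\<in>I'. d i = 0" unfolding I'_def
      proof (intro ballI)
        fix i assume "\<forall>i\<in>I. D i = 0" "i \<in> I - {s}"
        then have "D i = 0" "i \<noteq> s" by auto
        then show "d i = 0" unfolding D_def by simp
      qed
    qed
    have B''sub: "\<forall>b. \<forall>i\<in>I'. B'' b i \<subseteq> {x. length x = n}" unfolding B''_def by auto
    have IH: "\<And>b. card (S'' b) * ?q^(n * card I') \<le> (\<Prod>i\<in>I'. card (B'' b i)) * ?q^(n*k)"
      unfolding S''_def using Suc.IH[OF finI' lenc'' ind''] B''sub by blast
    have cardB'': "\<And>b i. length b = n \<Longrightarrow> i \<in> I' \<Longrightarrow> card (B'' b i) \<le> card (B i)"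
    proof -
      fix b :: "'a list" and i assume b: "length b = n" and i: "i \<in> I'"
      have inj: "inj_on (addv (smul (al i) b)) (B'' b i)"
      proof (rule inj_onI)
        fix x y assume x: "x \<in> B'' b i" and y: "y \<in> B'' b i" and e: "addv (smul (al i) b) x = addv (smul (al i) b) y"
        show "x = y"
        proof (rule nth_equalityI)
          show "length x = length y" using x y unfolding B''_def by simp
          fix p assume "p < length x"
          then have "addv (smul (al i) b) x ! p = addv (smul (al i) b) y ! p" "p < n" using e x unfolding B''_def by auto
          then show "x ! p = y ! p" using x y b unfolding B''_def addv_def smul_def by simp
        qed
      qed
      have "addv (smul (al i) b) ` B'' b i \<subseteq> B i" unfolding B''_def by auto
      moreover have "finite (B i)"
        by (rule finite_subset[of _ "{x::'a list. length x = n}"]) (use Suc.prems(4) i I'_def in auto)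
      ultimately show "card (B'' b i) \<le> card (B i)" using card_inj_on_le[OF inj] by blast
    qed
    define f where "f vs = (lc n vs (c s), tl vs)" for vs :: "'a list list"
    have finBs: "finite (B s)"
      by (rule finite_subset[of _ "{x::'a list. length x = n}"]) (use Suc.prems(4) s(1) in auto)
    have fmap: "f ` ?S \<subseteq> Sigma (B s) S''"
    proof
      fix z assume "z \<in> f ` ?S"
      then obtain vs where vs: "vs \<in> ?S" and z: "z = f vs" by auto
      then obtain v vs' where vv: "vs = v#vs'" "length v = n" "vs' \<in> tuples n k"
        unfolding tuples_def by (cases vs) auto
      let ?b = "lc n vs (c s)"
      have bB: "?b \<in> B s" using vs s(1) by auto
      have "\<forall>i\<in>I'. lc n vs' (c'' i) \<in> B'' ?b i"
      proof
        fix i assume i: "i \<in> I'"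
        have iI: "i \<in> I" using i I'_def by simp
        have "addv (smul (al i) ?b) (lc n vs' (c'' i)) = lc n vs (c i)"
        proof (rule nth_equalityI)
          show "length (addv (smul (al i) ?b) (lc n vs' (c'' i))) = length (lc n vs (c i))"
            by (simp add: addv_def smul_def)
          fix p assume "p < length (addv (smul (al i) ?b) (lc n vs' (c'' i)))"
          then have p: "p < n" by (simp add: addv_def smul_def)
          have e1: "lc n vs' (c'' i) ! p = lc n vs' (c' i) ! p - al i * lc n vs' (c' s) ! p"
            unfolding c''_def by (rule lc_sub) (use cdec iI s(1) p in auto)
          have e2: "?b ! p = a s * v!p + lc n vs' (c' s) ! p" using lcv[OF s(1) p] vv by simp
          have e3: "lc n vs (c i) ! p = a i * v!p + lc n vs' (c' i) ! p" using lcv[OF iI p] vv by simp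
          have e4: "al i * a s = a i" unfolding al_def using s(2) by simp
          have e5: "\<And>X Y Z V. al i * (a s * V + Y) + (Z - al i * Y) = (al i * a s) * V + Z"
            by (simp add: algebra_simps)
          have e4': "al i * a s = a i" using e4 by (simp add: mult.commute)
          have "addv (smul (al i) ?b) (lc n vs' (c'' i)) ! p = al i * ?b ! p + lc n vs' (c'' i) ! p"
            using p by (simp add: addv_def smul_def)
          also have "\<dots> = lc n vs (c i) ! p" unfolding e1 e2 e3 e5 e4' ..
          finally show "addv (smul (al i) ?b) (lc n vs' (c'' i)) ! p = lc n vs (c i) ! p" .
        qed
        then show "lc n vs' (c'' i) \<in> B'' ?b i" using vs iI unfolding B''_def by auto
      qed
      then have "vs' \<in> S'' ?b" unfolding S''_def using vv by auto
      then show "z \<in> Sigma (B s) S''" using z bB vv unfolding f_def by auto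
    qed
    have finj: "inj_on f ?S"
    proof (rule inj_onI)
      fix x y assume x: "x \<in> ?S" and y: "y \<in> ?S" and e: "f x = f y"
      obtain v vs' where xv: "x = v#vs'" "length v = n" "vs' \<in> tuples n k"
        using x unfolding tuples_def by (cases x) auto
      obtain w ws' where yw: "y = w#ws'" "length w = n" "ws' \<in> tuples n k"
        using y unfolding tuples_def by (cases y) auto
      have tl: "vs' = ws'" using e xv yw unfolding f_def by simp
      have "v = w"
      proof (rule nth_equalityI)
        show "length v = length w" using xv yw by simp
        fix p assume "p < length v"
        then have p: "p < n" using xv by simp
        have "lc n x (c s) ! p = lc n y (c s) ! p" using e unfolding f_def by simp
        then have "a s * v!p + lc n vs' (c' s) ! p = a s * w!p + lc n vs' (c' s) ! p"
          using lcv[OF s(1) p] xv yw tl by metis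
        then show "v!p = w!p" using s(2) by simp
      qed
      then show "x = y" using xv yw tl by simp
    qed
    have finS'': "\<And>b. finite (S'' b)"
      unfolding S''_def by (rule finite_subset[of _ "tuples n k"]) auto
    have "card ?S \<le> card (Sigma (B s) S'')"
      using card_inj_on_le[OF finj fmap] finBs finS'' by (simp add: finite_SigmaI)
    also have "\<dots> = (\<Sum>b\<in>B s. card (S'' b))" by (rule card_SigmaI) (use finBs finS'' in auto)
    finally have cS: "card ?S \<le> (\<Sum>b\<in>B s. card (S'' b))" .
    have cI: "card I = Suc (card I')" using Suc.prems(1) s(1) I'_def card_Suc_Diff1 by metis
    have "card ?S * ?q^(n * card I) \<le> (\<Sum>b\<in>B s. card (S'' b)) * ?q^(n * card I)"
      using cS by simp
    also have "\<dots> = (\<Sum>b\<in>B s. card (S'' b) * ?q^(n * card I')) * ?q^n"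
      unfolding cI by (simp add: sum_distrib_right power_add algebra_simps)
    also have "\<dots> \<le> (\<Sum>b\<in>B s. (\<Prod>i\<in>I'. card (B i)) * ?q^(n*k)) * ?q^n"
    proof (intro mult_right_mono sum_mono)
      fix b assume b: "b \<in> B s"
      then have bl: "length b = n" using Suc.prems(4) s(1) by auto
      have "(\<Prod>i\<in>I'. card (B'' b i)) \<le> (\<Prod>i\<in>I'. card (B i))"
        by (rule prod_mono) (use cardB''[OF bl] in auto)
      then show "card (S'' b) * ?q^(n * card I') \<le> (\<Prod>i\<in>I'. card (B i)) * ?q^(n*k)"
        using IH[of b] by (meson le_trans mult_le_mono1)
    qed simp
    also have "\<dots> = card (B s) * (\<Prod>i\<in>I'. card (B i)) * ?q^(n * Suc k)"
      by (simp add: power_add algebra_simps)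
    also have "card (B s) * (\<Prod>i\<in>I'. card (B i)) = (\<Prod>i\<in>I. card (B i))"
      using Suc.prems(1) s(1) unfolding I'_def by (simp add: prod.remove)
    finally show ?thesis .
  qed
qed



lemma del_path: "(insdel_step ^^ length a) a []"
proof (induction a)
  case Nil then show ?case by simp
next
  case (Cons x a)
  have "insdel_step (x#a) a" unfolding insdel_step_def by (intro disjI2 exI[of _ "[]"] exI[of _ a] exI[of _ x]) simp
  then show ?case using Cons relpowp_Suc_I2 by (metis length_Cons)
qed

lemma ins_path: "(insdel_step ^^ length b) [] b"
proof (induction b)
  case Nil then show ?case by simp
next
  case (Cons x b)
  have "insdel_step b (x#b)" unfolding insdel_step_def by (intro disjI1 exI[of _ "[]"] exI[of _ b] exI[of _ x]) simp
  then show ?case using Cons relpowp_Suc_I by (metis length_Cons)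
qed

lemma path_exists: "\<exists>k. (insdel_step ^^ k) a b"
proof -
  have "(insdel_step ^^ (length a + length b)) a b"
    unfolding relpowp_add using del_path ins_path by (auto intro!: relcomppI)
  then show ?thesis by blast
qed

lemma insdel_dist_path: "(insdel_step ^^ insdel_dist a b) a b"
  unfolding insdel_dist_def using path_exists by (rule LeastI_ex)

lemma subseq_del:
  "subseq s (xs @ x # ys) \<Longrightarrow> \<exists>s'. subseq s' s \<and> subseq s' (xs @ ys) \<and> length s \<le> Suc (length s')"
proof (induction xs arbitrary: s)
  case Nil
  show ?case
  proof (cases s)
    case Nil then show ?thesis by (intro exI[of _ "[]"]) simp
  next
    case (Cons y s0)
    show ?thesis
    proof (cases "y = x")
      case True
      then have "subseq s0 ys" using Nil.prems Cons by simp
      moreover have "subseq s0 s" using Cons by (metis list_emb_Cons subseq_order.order_refl)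
      ultimately show ?thesis using Cons by (intro exI[of _ s0]) simp
    next
      case False
      then have "subseq s ys" using Nil.prems Cons by simp
      then show ?thesis by (intro exI[of _ s]) (simp add: subseq_order.order_refl)
    qed
  qed
next
  case (Cons z xs)
  show ?case
  proof (cases s)
    case Nil then show ?thesis by (intro exI[of _ "[]"]) simp
  next
    case (Cons y s0)
    show ?thesis
    proof (cases "y = z")
      case True
      then have "subseq s0 (xs @ x # ys)" using Cons.prems Cons by simp
      then obtain s0' where h: "subseq s0' s0" "subseq s0' (xs @ ys)" "length s0 \<le> Suc (length s0')"
        using Cons.IH by blast
      have "subseq (z#s0') s" using h(1) Cons True by simp
      moreover have "subseq (z#s0') ((z#xs) @ ys)" using h(2) by simp
      ultimately show ?thesis using h(3) Cons by (intro exI[of _ "z#s0'"]) simp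
    next
      case False
      then have "subseq s (xs @ x # ys)" using Cons.prems Cons by simp
      then obtain s' where h: "subseq s' s" "subseq s' (xs @ ys)" "length s \<le> Suc (length s')"
        using Cons.IH by blast
      have "subseq s' ((z#xs) @ ys)" using h(2) by (simp add: list_emb_Cons)
      then show ?thesis using h by (intro exI[of _ s']) simp
    qed
  qed
qed

lemma path_common_subseq:
  "(insdel_step ^^ k) a b \<Longrightarrow> \<exists>s. subseq s a \<and> subseq s b \<and> length a + length b \<le> k + 2 * length s"
proof (induction k arbitrary: b)
  case 0
  then have "a = b" by simp
  then show ?case by (intro exI[of _ a]) (simp add: subseq_order.order_refl)
next
  case (Suc k)
  from Suc.prems obtain y where y: "(insdel_step ^^ k) a y" "insdel_step y b" by (rule relpowp_Suc_E)
  obtain s where s: "subseq s a" "subseq s y" "length a + length y \<le> k + 2 * length s"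
    using Suc.IH[OF y(1)] by blast
  from y(2) show ?case unfolding insdel_step_def
  proof (elim disjE exE conjE)
    fix xs ys x assume b: "b = xs @ x # ys" and yy: "y = xs @ ys"
    have "subseq y b" using b yy by (simp add: subseq_append' list_emb_Cons)
    then have "subseq s b" using subseq_order.trans[OF s(2)] by simp
    moreover have "length b = Suc (length y)" using b yy by simp
    ultimately show ?thesis using s by (intro exI[of _ s]) simp
  next
    fix xs ys x assume yy: "y = xs @ x # ys" and b: "b = xs @ ys"
    obtain s' where s': "subseq s' s" "subseq s' b" "length s \<le> Suc (length s')"
      using subseq_del[of s xs x ys] s(2) yy b by auto
    have "subseq s' a" using subseq_order.trans[OF s'(1) s(1)] .
    moreover have "length y = Suc (length b)" using b yy by simp
    ultimately show ?thesis using s s' by (intro exI[of _ s']) simp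
  qed
qed

lemma finite_len_set[simp]: "finite {s :: 'a::finite list. P s \<and> length s = l}"
  by (rule finite_subset[of _ "{s. length s = l}"]) auto

lemma card_subseqs: "card {s :: 'a::finite list. subseq s r \<and> length s = l} \<le> length r choose l"
proof (induction r arbitrary: l)
  case Nil
  have "{s :: 'a list. subseq s [] \<and> length s = l} \<subseteq> {[]}" by auto
  then have "card {s :: 'a list. subseq s [] \<and> length s = l} \<le> card {[]::'a list}" by (intro card_mono) auto
  then show ?case by (cases l) auto
next
  case (Cons x r)
  show ?case
  proof (cases l)
    case 0
    have "{s :: 'a list. subseq s (x#r) \<and> length s = l} \<subseteq> {[]}" using 0 by auto
    then have "card {s :: 'a list. subseq s (x#r) \<and> length s = l} \<le> card {[]::'a list}" by (intro card_mono) auto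
    then show ?thesis using 0 by simp
  next
    case (Suc l')
    have sub: "{s :: 'a list. subseq s (x#r) \<and> length s = l} \<subseteq>
      (Cons x) ` {s. subseq s r \<and> length s = l'} \<union> {s. subseq s r \<and> length s = l}"
    proof
      fix s assume h: "s \<in> {s :: 'a list. subseq s (x#r) \<and> length s = l}"
      then obtain y s0 where s: "s = y # s0" using Suc by (cases s) auto
      show "s \<in> (Cons x) ` {s. subseq s r \<and> length s = l'} \<union> {s. subseq s r \<and> length s = l}"
      proof (cases "y = x")
        case True then show ?thesis using h s Suc by auto
      next
        case False then show ?thesis using h s by auto
      qed
    qed
    have "card {s :: 'a list. subseq s (x#r) \<and> length s = l} \<le>
       card ((Cons x) ` {s. subseq s r \<and> length s = l'} \<union> {s. subseq s r \<and> length s = l})"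
      by (rule card_mono[OF _ sub]) simp
    also have "\<dots> \<le> card ((Cons x) ` {s. subseq s r \<and> length s = l'}) + card {s. subseq s r \<and> length s = l}"
      by (rule card_Un_le)
    also have "\<dots> \<le> card {s. subseq s r \<and> length s = l'} + card {s. subseq s r \<and> length s = l}"
      using card_image_le by (simp add: card_image_le)
    also have "\<dots> \<le> (length r choose l') + (length r choose l)" using Cons.IH by (intro add_mono) auto
    also have "\<dots> = length (x#r) choose l" using Suc by simp
    finally show ?thesis .
  qed
qed

lemma card_supseq:
  fixes p r :: real
  defines "q \<equiv> real CARD('a::finite)"
  assumes p: "0 < p" "p < 1" "p * q \<le> q - 1" and r: "r = (q - 1) * (1 - p) / p"
  shows "length (s::'a list) \<le> n \<Longrightarrow> real (card {c. length c = n \<and> subseq s c}) \<le> r^(n - length s) / (1-p)^n"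
proof (induction n arbitrary: s)
  case 0
  then have "s = []" by simp
  have "{c :: 'a list. length c = 0 \<and> subseq s c} \<subseteq> {[]}" by auto
  then have "card {c :: 'a list. length c = 0 \<and> subseq s c} \<le> card {[]::'a list}" by (intro card_mono) auto
  then show ?case by simp
next
  case (Suc n)
  have q1: "q \<ge> 1" unfolding q_def by (simp add: Suc_leI)
  have rp: "r / (1 - p) = (q - 1) / p" using p unfolding r by (simp add: field_simps)
  have r0: "r \<ge> 0" unfolding r using p q1 by simp
  show ?case
  proof (cases s)
    case Nil
    have "{c :: 'a list. length c = Suc n \<and> subseq s c} = {c. length c = Suc n}" using Nil by auto
    then have "real (card {c :: 'a list. length c = Suc n \<and> subseq s c}) = q ^ Suc n" by (simp add: q_def)
    also have "\<dots> \<le> ((q - 1) / p) ^ Suc n"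
    proof (rule power_mono)
      show "q \<le> (q - 1) / p" using p by (simp add: field_simps)
    qed (use q1 in simp)
    also have "\<dots> = (r / (1 - p)) ^ Suc n" unfolding rp ..
    also have "\<dots> = r^(Suc n - length s) / (1-p)^Suc n" using Nil by (simp only: power_divide list.size diff_zero)
    finally show ?thesis .
  next
    case (Cons y s')
    let ?A = "\<lambda>t. {c :: 'a list. length c = n \<and> subseq t c}"
    have sub: "{c :: 'a list. length c = Suc n \<and> subseq s c} \<subseteq> (Cons y) ` ?A s' \<union> (\<Union>x\<in>UNIV - {y}. (Cons x) ` ?A s)"
    proof
      fix c assume h: "c \<in> {c :: 'a list. length c = Suc n \<and> subseq s c}"
      then obtain x c' where c: "c = x # c'" by (cases c) auto
      show "c \<in> (Cons y) ` ?A s' \<union> (\<Union>x\<in>UNIV - {y}. (Cons x) ` ?A s)"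
      proof (cases "x = y")
        case True then show ?thesis using h c Cons by auto
      next
        case False then show ?thesis using h c Cons by auto
      qed
    qed
    have "card {c :: 'a list. length c = Suc n \<and> subseq s c} \<le> card ((Cons y) ` ?A s' \<union> (\<Union>x\<in>UNIV - {y}. (Cons x) ` ?A s))"
      by (rule card_mono[OF _ sub]) simp
    also have "\<dots> \<le> card ((Cons y) ` ?A s') + card (\<Union>x\<in>UNIV - {y}. (Cons x) ` ?A s)"
      by (rule card_Un_le)
    also have "\<dots> \<le> card (?A s') + (\<Sum>x\<in>UNIV - {y}. card ((Cons x) ` ?A s))"
      by (intro add_mono card_image_le card_UN_le) auto
    also have "\<dots> \<le> card (?A s') + (\<Sum>x\<in>UNIV - {y}. card (?A s))"
      by (intro add_mono sum_mono card_image_le) auto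
    also have "\<dots> = card (?A s') + (CARD('a) - 1) * card (?A s)"
      by (simp add: card_Diff_subset)
    finally have cle0: "card {c :: 'a list. length c = Suc n \<and> subseq s c} \<le> card (?A s') + (CARD('a) - 1) * card (?A s)" .
    have "real (card {c :: 'a list. length c = Suc n \<and> subseq s c}) \<le> real (card (?A s') + (CARD('a) - 1) * card (?A s))"
      using cle0 by (simp only: of_nat_le_iff)
    also have "\<dots> = real (card (?A s')) + (q - 1) * real (card (?A s))"
      using q1 unfolding q_def by (simp add: of_nat_diff Suc_leI)
    finally have cle: "real (card {c :: 'a list. length c = Suc n \<and> subseq s c}) \<le> real (card (?A s')) + (q - 1) * real (card (?A s))" .
    have IH1: "real (card (?A s')) \<le> r^(n - length s') / (1-p)^n" using Suc.IH[of s'] Suc.prems Cons by simp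
    show ?thesis
    proof (cases "length s \<le> n")
      case True
      have IH2: "real (card (?A s)) \<le> r^(n - length s) / (1-p)^n" using Suc.IH[of s] True by simp
      have e: "n - length s' = Suc (n - length s)" using True Cons by simp
      have "real (card {c :: 'a list. length c = Suc n \<and> subseq s c}) \<le> r^(Suc (n - length s)) / (1-p)^n + (q - 1) * (r^(n - length s) / (1-p)^n)"
      proof -
        have "(q - 1) * real (card (?A s)) \<le> (q - 1) * (r^(n - length s) / (1-p)^n)"
          using IH2 q1 by (intro mult_left_mono) auto
        then show ?thesis using cle IH1 e by simp
      qed
      also have "\<dots> = r^(n - length s) / (1-p)^n * (r + (q - 1))"
      proof -
        have "r^(Suc (n - length s)) / (1-p)^n = r * (r^(n - length s) / (1-p)^n)" by simp
        then show ?thesis by (simp only: algebra_simps)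
      qed
      also have "r + (q - 1) = r / (1 - p)" using rp p unfolding r by (simp add: field_simps)
      also have "r^(n - length s) / (1-p)^n * (r / (1 - p)) = r^(Suc n - length s) / (1-p)^Suc n"
      proof -
        have "Suc n - length s = Suc (n - length s)" using True by (simp add: Suc_diff_le)
        then show ?thesis by (simp add: mult.commute)
      qed
      finally show ?thesis .
    next
      case False
      then have "?A s = {}" by auto
      then have c0: "card (?A s) = 0" by (simp only: card.empty)
      have A: "real (card {c :: 'a list. length c = Suc n \<and> subseq s c}) \<le> r^(n - length s') / (1-p)^n"
        using cle IH1 unfolding c0 by simp
      have z1: "n - length s' = 0" using False Cons by simp
      have z2: "Suc n - length s = 0" using Suc.prems by (metis False Cons le_antisym diff_is_0_eq' not_less_eq_eq length_Cons)
      have pw: "(1-p)^Suc n \<le> (1-p)^n" using p by (intro power_decreasing) auto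
      have "1 / (1-p)^n \<le> 1 / (1-p)^Suc n"
        using p pw by (intro divide_left_mono) auto
      then show ?thesis using A z1 z2 by simp
    qed
  qed
qed



lemma binom_bound:
  fixes x :: real
  assumes x: "0 < x" "x < 1" and j: "j \<le> m"
  shows "real (m choose j) \<le> exp (- real j * ln x - real (m - j) * ln (1 - x))"
proof -
  have "1 = (x + (1 - x))^m" by simp
  also have "\<dots> = (\<Sum>k\<le>m. real (m choose k) * x^k * (1-x)^(m-k))" by (rule binomial_ring)
  finally have s: "(\<Sum>k\<le>m. real (m choose k) * x^k * (1-x)^(m-k)) = 1" by simp
  have "real (m choose j) * x^j * (1-x)^(m-j) \<le> (\<Sum>k\<le>m. real (m choose k) * x^k * (1-x)^(m-k))"
    by (rule member_le_sum) (use x j in auto)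
  then have le: "real (m choose j) * (x^j * (1-x)^(m-j)) \<le> 1" using s by (simp add: mult.assoc)
  have pos: "x^j * (1-x)^(m-j) > 0" using x by simp
  have "x^j * (1-x)^(m-j) = exp (real j * ln x + real (m - j) * ln (1 - x))"
    using x by (simp add: exp_add ln_realpow[symmetric])
  then have "real (m choose j) \<le> 1 / exp (real j * ln x + real (m - j) * ln (1 - x))"
    using le pos by (simp add: field_simps)
  also have "\<dots> = exp (- (real j * ln x + real (m - j) * ln (1 - x)))"
    by (subst exp_minus) (simp add: divide_inverse)
  also have "- (real j * ln x + real (m - j) * ln (1 - x)) = - real j * ln x - real (m - j) * ln (1 - x)"
    by simp
  finally show ?thesis .
qed

lemma F1_bound:
  fixes q g k :: real
  assumes q: "q > 1" and k: "0 \<le> k" "k < 1" and g: "g \<ge> 0" and j: "j \<le> m"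
    and jn: "real j \<le> g * real n" and mj: "real (m - j) \<le> (1 - k) * real n"
  shows "real (m choose j) \<le> exp (real n * ((2*g - k + 1) * Hq q (g / (2*g - k + 1)) - g * log q (q - 1)) * ln q)"
proof (cases "g = 0")
  case True
  then have "j = 0" using jn by simp
  then show ?thesis using True by (simp add: Hq_def)
next
  case False
  then have g0: "g > 0" using g by simp
  define D where "D = 2*g - k + 1"
  define x where "x = g / D"
  have D0: "D > 0" "g < D" unfolding D_def using g0 k by auto
  have x: "0 < x" "x < 1" unfolding x_def using D0 g0 by (auto simp: field_simps)
  have Dx: "D * x = g" "D * (1 - x) = D - g" unfolding x_def using D0 by (auto simp: field_simps)
  have lq: "ln q > 0" using q by simp
  have H: "D * Hq q x - g * log q (q - 1) = (- g * ln x - (D - g) * ln (1 - x)) / ln q"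
  proof -
    have "Hq q x = x * log q (q - 1) - x * log q x - (1 - x) * log q (1 - x)"
      unfolding Hq_def using x by auto
    then have "D * Hq q x = D * (x * log q (q - 1) - x * log q x - (1 - x) * log q (1 - x))"
      by simp
    also have "\<dots> = (D*x) * log q (q - 1) - (D*x) * log q x - (D*(1 - x)) * log q (1 - x)"
      by algebra
    finally have "D * Hq q x = (D*x) * log q (q - 1) - (D*x) * log q x - (D*(1 - x)) * log q (1 - x)" .
    then have P: "D * Hq q x = g * log q (q - 1) - g * log q x - (D - g) * log q (1 - x)"
      by (simp only: Dx)
    have "D * Hq q x - g * log q (q - 1) = - g * (ln x / ln q) - (D - g) * (ln (1 - x) / ln q)"
      unfolding P log_def by simp
    also have "\<dots> = (- g * ln x - (D - g) * ln (1 - x)) / ln q"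
      by (simp add: diff_divide_distrib)
    finally show ?thesis .
  qed
  have "real (m choose j) \<le> exp (- real j * ln x - real (m - j) * ln (1 - x))"
    by (rule binom_bound[OF x j])
  also have "\<dots> \<le> exp (real n * (- g * ln x - (D - g) * ln (1 - x)))"
  proof -
    have l1: "ln x < 0" "ln (1 - x) < 0" using x by auto
    have a: "- real j * ln x \<le> - (g * real n) * ln x"
      using jn l1 by (intro mult_right_mono_neg) auto
    have "real (m - j) \<le> (D - g) * real n" using mj unfolding D_def
      by (smt (verit, ccfv_SIG) g mult_right_mono of_nat_0_le_iff)
    then have b: "- real (m - j) * ln (1 - x) \<le> - ((D - g) * real n) * ln (1 - x)"
      using l1 by (intro mult_right_mono_neg) auto
    show ?thesis using a b by (simp add: algebra_simps)
  qed
  also have "\<dots> = exp (real n * (D * Hq q x - g * log q (q - 1)) * ln q)"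
    unfolding H using lq by simp
  finally show ?thesis unfolding D_def x_def .
qed

lemma F2_eq:
  fixes q k :: real
  assumes q: "q > 2" and k: "0 < k" "k < 1" and i0: "real i0 = k * real n"
  shows "((q - 1) * (1 - k) / k)^i0 / (1 - k)^n = exp (real n * Hq q k * ln q)"
proof -
  have lq: "ln q > 0" using q by simp
  have pos: "((q - 1) * (1 - k) / k)^i0 / (1 - k)^n > 0" using q k by simp
  have "ln (((q - 1) * (1 - k) / k)^i0 / (1 - k)^n) = real i0 * (ln (q - 1) + ln (1 - k) - ln k) - real n * ln (1 - k)"
    using q k by (simp add: ln_div ln_mult ln_realpow)
  also have "\<dots> = real n * (k * ln (q - 1) - k * ln k - (1 - k) * ln (1 - k))"
    unfolding i0 by (simp add: algebra_simps)
  also have "\<dots> = real n * Hq q k * ln q"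
    unfolding Hq_def log_def using k lq by (simp add: field_simps)
  finally show ?thesis using pos by (metis exp_ln)
qed



lemma ball_bound:
  fixes r :: "'a::finite list" and tau M :: real
  defines "q \<equiv> real CARD('a)"
  assumes q3: "q \<ge> 3" and tau: "0 \<le> tau" and tauk: "tau < (q - 1) / q" and n: "n \<ge> 1"
    and H: "\<And>g k. 0 \<le> g \<Longrightarrow> g < q - 1 \<Longrightarrow> 0 \<le> k \<Longrightarrow> k < (q - 1) / q \<Longrightarrow> g + k = tau \<Longrightarrow>
                  insdel_obj q g k \<le> M"
  shows "real (card {c. length c = n \<and> real (insdel_dist r c) \<le> tau * real n}) \<le> real (n+1) * exp (real n * M * ln q)"
proof -
  define m where "m = length r"
  define L where "L = {l. l \<le> n \<and> l \<le> m \<and> real (m + n) \<le> tau * real n + 2 * real l}"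
  define Sub where "Sub l = {s::'a list. subseq s r \<and> length s = l}" for l
  define Ball where "Ball = {c::'a list. length c = n \<and> real (insdel_dist r c) \<le> tau * real n}"
  define E where "E = exp (real n * M * ln q)"
  have q1: "q > 2" using q3 by simp
  have "(q - 1) / q < 1" using q1 by simp
  then have tau1: "tau < 1" using tauk by linarith
  have finL: "finite L" unfolding L_def by (rule finite_subset[of _ "{..n}"]) auto
  have finSub: "\<And>l. finite (Sub l)" unfolding Sub_def by simp
  have sub: "Ball \<subseteq> (\<Union>l\<in>L. \<Union>s\<in>Sub l. {c. length c = n \<and> subseq s c})"
  proof
    fix c assume c: "c \<in> Ball"
    obtain s where s: "subseq s r" "subseq s c" "length r + length c \<le> insdel_dist r c + 2 * length s"
      using path_common_subseq[OF insdel_dist_path] by blast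
    have ls: "length s \<le> n" "length s \<le> m" using s c list_emb_length unfolding Ball_def m_def by fastforce+
    have "real (m + n) \<le> real (insdel_dist r c) + 2 * real (length s)"
      using s(3) c unfolding Ball_def m_def by (metis (mono_tags, lifting) mem_Collect_eq of_nat_add of_nat_le_iff of_nat_mult of_nat_numeral)
    then have "real (m + n) \<le> tau * real n + 2 * real (length s)" using c unfolding Ball_def by simp
    then have "length s \<in> L" using ls unfolding L_def by simp
    moreover have "s \<in> Sub (length s)" using s unfolding Sub_def by simp
    ultimately show "c \<in> (\<Union>l\<in>L. \<Union>s\<in>Sub l. {c. length c = n \<and> subseq s c})" using s c unfolding Ball_def by blast
  qed
  have perl: "real (card (\<Union>s\<in>Sub l. {c::'a list. length c = n \<and> subseq s c})) \<le> E" if l: "l \<in> L" for l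
  proof -
    have l1: "l \<le> n" "l \<le> m" and lr: "real (m + n) \<le> tau * real n + 2 * real l" using l unfolding L_def by auto
    define k where "k = real (n - l) / real n"
    define g where "g = tau - k"
    have nl: "real (n - l) = real n - real l" using l1 by simp
    have k0: "0 \<le> k" unfolding k_def by simp
    have kn: "real (n - l) = k * real n" unfolding k_def using n by simp
    have ktau: "k \<le> tau"
    proof -
      have "real (n - l) \<le> tau * real n" using lr l1 nl by simp
      then show ?thesis unfolding k_def using n by (simp add: divide_le_eq)
    qed
    have l0: "l \<ge> 1"
    proof (rule ccontr)
      assume "\<not> l \<ge> 1"
      then have "l = 0" by simp
      then have "real n \<le> tau * real n" using lr by simp
      then show False using tau1 n by (smt (verit) mult_less_cancel_right2 of_nat_0_less_iff less_le_trans zero_less_one)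
    qed
    have k1: "k < 1" unfolding k_def using n l0 l1 by (simp add: divide_less_eq)
    have kk: "k < (q - 1) / q" using ktau tauk by simp
    have g0: "0 \<le> g" unfolding g_def using ktau by simp
    have gq: "g < q - 1" unfolding g_def using k0 tau1 q1 by simp
    have jn: "real (m - l) \<le> g * real n"
    proof -
      have "real (m - l) = real m - real l" using l1 by simp
      then show ?thesis unfolding g_def using lr kn nl by (simp add: algebra_simps)
    qed
    have mj: "real (m - (m - l)) \<le> (1 - k) * real n"
      using l1 kn nl by (simp add: algebra_simps)
    have F1: "real (m choose l) \<le> exp (real n * ((2*g - k + 1) * Hq q (g / (2*g - k + 1)) - g * log q (q - 1)) * ln q)"
      using F1_bound[of q k g "m - l" m n] q1 k0 k1 g0 jn mj binomial_symmetric[OF l1(2)] by simp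
    define Nb where "Nb = (if l = n then 1 else ((q - 1) * (1 - k) / k)^(n - l) / (1 - k)^n)"
    have Nb0: "0 \<le> Nb" unfolding Nb_def using k1 q1 k0 by simp
    have Nb_le: "Nb \<le> exp (real n * Hq q k * ln q)"
    proof (cases "l = n")
      case True
      then have "k = 0" unfolding k_def by simp
      then show ?thesis using True unfolding Nb_def by (simp add: Hq_def)
    next
      case False
      then have kp: "k > 0" unfolding k_def using l1 n by simp
      show ?thesis unfolding Nb_def using False F2_eq[OF q1 kp k1 kn] by simp
    qed
    have Ncard: "real (card {c::'a list. length c = n \<and> subseq s c}) \<le> Nb" if s: "s \<in> Sub l" for s
    proof (cases "l = n")
      case True
      have "{c::'a list. length c = n \<and> subseq s c} \<subseteq> {s}"
        using s True subseq_same_length unfolding Sub_def by fastforce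
      then have "card {c::'a list. length c = n \<and> subseq s c} \<le> card {s}" by (intro card_mono) auto
      then show ?thesis unfolding Nb_def using True by simp
    next
      case False
      then have kp: "k > 0" unfolding k_def using l1 n by simp
      have pq: "k * q \<le> q - 1" using kk q1 by (simp add: field_simps)
      have "real (card {c::'a list. length c = n \<and> subseq s c}) \<le> ((q - 1) * (1 - k) / k)^(n - length s) / (1-k)^n"
        using card_supseq[of k "(q - 1) * (1 - k) / k" s n] kp k1 pq s l1 unfolding Sub_def q_def by simp
      then show ?thesis unfolding Nb_def using False s unfolding Sub_def by simp
    qed
    have "real (card (\<Union>s\<in>Sub l. {c::'a list. length c = n \<and> subseq s c})) \<le> real (\<Sum>s\<in>Sub l. card {c::'a list. length c = n \<and> subseq s c})"
      by (simp only: of_nat_le_iff) (rule card_UN_le[OF finSub])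
    also have "\<dots> = (\<Sum>s\<in>Sub l. real (card {c::'a list. length c = n \<and> subseq s c}))" by simp
    also have "\<dots> \<le> (\<Sum>s\<in>Sub l. Nb)" by (rule sum_mono) (rule Ncard)
    also have "\<dots> = real (card (Sub l)) * Nb" by simp
    also have "\<dots> \<le> real (m choose l) * Nb"
    proof (rule mult_right_mono)
      show "real (card (Sub l)) \<le> real (m choose l)" unfolding Sub_def m_def using card_subseqs by simp
      show "0 \<le> Nb" by (rule Nb0)
    qed
    also have "\<dots> \<le> exp (real n * ((2*g - k + 1) * Hq q (g / (2*g - k + 1)) - g * log q (q - 1)) * ln q) * exp (real n * Hq q k * ln q)"
      by (rule mult_mono[OF F1 Nb_le]) (use Nb0 in auto)
    also have "\<dots> = exp (real n * insdel_obj q g k * ln q)"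
      unfolding insdel_obj_def by (simp add: exp_add[symmetric] algebra_simps)
    also have "\<dots> \<le> E" unfolding E_def
    proof -
      have "insdel_obj q g k \<le> M" using H[OF g0 gq k0 kk] g_def by simp
      then show "exp (real n * insdel_obj q g k * ln q) \<le> exp (real n * M * ln q)"
        using q1 by (simp add: mult_right_mono mult_left_mono)
    qed
    finally show ?thesis .
  qed
  have "real (card Ball) \<le> real (card (\<Union>l\<in>L. \<Union>s\<in>Sub l. {c::'a list. length c = n \<and> subseq s c}))"
    unfolding of_nat_le_iff by (rule card_mono[OF _ sub]) (auto intro: finite_subset[of _ "{c::'a list. length c = n}"])
  also have "\<dots> \<le> real (\<Sum>l\<in>L. card (\<Union>s\<in>Sub l. {c::'a list. length c = n \<and> subseq s c}))"
    by (simp only: of_nat_le_iff) (rule card_UN_le[OF finL])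
  also have "\<dots> = (\<Sum>l\<in>L. real (card (\<Union>s\<in>Sub l. {c::'a list. length c = n \<and> subseq s c})))" by simp
  also have "\<dots> \<le> (\<Sum>l\<in>L. E)" by (rule sum_mono) (rule perl)
  also have "\<dots> = real (card L) * E" by simp
  also have "\<dots> \<le> real (n+1) * E"
  proof (rule mult_right_mono)
    have "card L \<le> card {..n}" unfolding L_def by (intro card_mono) auto
    then show "real (card L) \<le> real (n+1)" by simp
  qed (simp add: E_def)
  finally show ?thesis unfolding Ball_def E_def .
qed



lemma F1_nonneg:
  fixes q g k :: real
  assumes q: "q > 1" and k: "0 \<le> k" "k < 1" and g: "g \<ge> 0"
  shows "(2*g - k + 1) * Hq q (g / (2*g - k + 1)) - g * log q (q - 1) \<ge> 0"
proof -
  have "real (0 choose 0) \<le> exp (real 1 * ((2*g - k + 1) * Hq q (g / (2*g - k + 1)) - g * log q (q - 1)) * ln q)"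
    by (rule F1_bound[OF q k g]) (use g k in auto)
  then have "0 \<le> ((2*g - k + 1) * Hq q (g / (2*g - k + 1)) - g * log q (q - 1)) * ln q"
    by simp
  moreover have "ln q > 0" using q by simp
  ultimately show ?thesis by (simp add: zero_le_mult_iff)
qed

lemma Hq_k0:
  fixes q :: real assumes q: "q > 2"
  shows "(q - 1) / q * log q (q - 1) - (q - 1) / q * log q ((q - 1) / q) - (1 - (q - 1) / q) * log q (1 - (q - 1) / q) = 1"
proof -
  have lq: "log q q = 1" using q by simp
  have a: "log q ((q - 1) / q) = log q (q - 1) - 1" using q lq by (simp add: log_divide)
  have b: "1 - (q - 1) / q = 1 / q" using q by (simp add: field_simps)
  have c: "log q (1 / q) = - 1" using q lq by (simp add: log_divide)
  show ?thesis unfolding a b c using q by (simp add: field_simps)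
qed

lemma M_ge_1:
  fixes q tau M :: real
  assumes q: "q \<ge> 3" and tau_ge: "tau \<ge> (q - 1) / q" and tau_lt: "tau < q - 1 + (q - 1) / q"
    and H: "\<And>g k. 0 \<le> g \<Longrightarrow> g < q - 1 \<Longrightarrow> 0 \<le> k \<Longrightarrow> k < (q - 1) / q \<Longrightarrow> g + k = tau \<Longrightarrow>
                  insdel_obj q g k \<le> M"
  shows "M \<ge> 1"
proof (rule ccontr)
  assume "\<not> M \<ge> 1"
  then have M1: "M < 1" by simp
  define k0 where "k0 = (q - 1) / q"
  define f where "f k = k * log q (q - 1) - k * log q k - (1 - k) * log q (1 - k)" for k
  have q2: "q > 2" using q by simp
  have k0: "0 < k0" "k0 < 1" unfolding k0_def using q2 by auto
  have lim: "(f \<longlongrightarrow> f k0) (at_left k0)"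
    unfolding f_def using k0 q2 by (intro tendsto_intros) auto
  have fk0: "f k0 = 1" unfolding f_def k0_def by (rule Hq_k0[OF q2])
  have ev1: "eventually (\<lambda>k. M < f k) (at_left k0)"
    using order_tendstoD(1)[OF lim] M1 fk0 by simp
  define a where "a = max 0 (tau - (q - 1))"
  have ak: "a < k0" unfolding a_def k0_def using k0 tau_lt k0_def by auto
  have ev2: "eventually (\<lambda>k. k \<in> {a<..<k0}) (at_left k0)" by (rule eventually_at_left_real[OF ak])
  obtain k where k: "M < f k" "k \<in> {a<..<k0}"
    using eventually_happens'[OF _ eventually_conj[OF ev1 ev2]] by auto
  have kk: "0 < k" "k < k0" "tau - (q - 1) < k" using k unfolding a_def by auto
  have k1: "k < 1" using kk k0 by simp
  define g where "g = tau - k"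
  have g0: "0 \<le> g" unfolding g_def using kk tau_ge k0_def by simp
  have gq: "g < q - 1" unfolding g_def using kk by simp
  have "insdel_obj q g k \<le> M" using H[OF g0 gq] kk g_def k0_def by simp
  moreover have "insdel_obj q g k \<ge> f k"
  proof -
    have "Hq q k = f k" unfolding Hq_def f_def using kk k1 by simp
    moreover have "(2*g - k + 1) * Hq q (g / (2*g - k + 1)) - g * log q (q - 1) \<ge> 0"
      using F1_nonneg[of q k g] q kk k1 g0 by simp
    ultimately show ?thesis unfolding insdel_obj_def by simp
  qed
  ultimately show False using k(1) by simp
qed



lemma card_T_half:
  fixes q :: real
  defines "q \<equiv> real CARD('a::{finite,field})"
  assumes q3: "q \<ge> 3" and kn: "k \<le> n"
  shows "real (card (indep_tuples n k :: 'a list list set)) \<ge> q^(n*k) / 2"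
proof -
  have q1: "q > 1" using q3 by simp
  have "(\<Sum>j<k. q^j) = (q^k - 1) / (q - 1)" using q1 by (simp add: geometric_sum)
  also have "\<dots> \<le> q^k / 2"
  proof -
    have "q^k \<ge> 1" using q1 by simp
    then have "(q^k - 1) / (q - 1) \<le> (q^k - 1) / 2" using q3 by (intro divide_left_mono) auto
    then show ?thesis by (simp add: divide_right_mono)
  qed
  also have "\<dots> \<le> q^n / 2" using q1 kn by (simp add: power_increasing)
  finally have S: "(\<Sum>j<k. q^j) / q^n \<le> 1/2" using q1 by (simp add: divide_le_eq)
  have "q^(n*k) / 2 \<le> q^(n*k) * (1 - (\<Sum>j<k. q^j) / q^n)"
    using S q1 by (simp add: mult_left_mono[of "1/2" "1 - (\<Sum>j<k. q^j) / q^n" "q^(n*k)", simplified])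
  also have "\<dots> \<le> real (card (indep_tuples n k :: 'a list list set))"
    using card_indep_tuples_ge[OF kn] unfolding q_def by simp
  finally show ?thesis .
qed

lemma lin_span_Nil: "lin_span n [] = {replicate n (0::'a::field)}"
  unfolding lin_span_def lincomb_def by auto

lemma main_k0:
  fixes L tau :: real
  assumes L: "L \<ge> 1"
  shows "real (card {vs \<in> (indep_tuples n 0 :: 'a::{finite,field} list list set). list_decodable n (lin_span n vs) tau L})
         \<ge> (1 - real CARD('a) powr (- real n)) * real (card (indep_tuples n 0 :: 'a list list set))"
proof -
  have T: "(indep_tuples n 0 :: 'a list list set) = {[]}" by (auto simp: indep_tuples_def lin_indep_def)
  have "list_decodable n (lin_span n ([]::'a list list)) tau L"
    unfolding list_decodable_def
  proof (intro allI impI)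
    fix m :: nat and r :: "'a list"
    have "card (insdel_ball r (tau * real n) \<inter> lin_span n []) \<le> card {replicate n (0::'a)}"
      unfolding lin_span_Nil by (intro card_mono) auto
    then show "real (card (insdel_ball r (tau * real n) \<inter> lin_span n [])) \<le> L" using L by simp
  qed
  then have "{vs \<in> (indep_tuples n 0 :: 'a list list set). list_decodable n (lin_span n vs) tau L} = {[]}"
    using T by auto
  moreover have "real CARD('a) powr (- real n) \<ge> 0" by simp
  ultimately show ?thesis using T by simp
qed

lemma Hq_nonneg:
  fixes q k :: real assumes q: "q \<ge> 2" and k: "0 \<le> k" "k < 1" shows "Hq q k \<ge> 0"
proof (cases "k = 0")
  case True then show ?thesis by (simp add: Hq_def)
next
  case False
  then have k0: "0 < k" using k by simp
  have a: "log q (q - 1) \<ge> 0" using q by simp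
  have b: "log q k \<le> 0" using q k0 k by simp
  have c: "log q (1 - k) \<le> 0" using q k by simp
  have "k * log q (q - 1) \<ge> 0" using a k0 by simp
  moreover have "k * log q k \<le> 0" using b k0 by (simp add: mult_nonneg_nonpos)
  moreover have "(1 - k) * log q (1 - k) \<le> 0" using c k by (simp add: mult_nonneg_nonpos)
  ultimately show ?thesis unfolding Hq_def using k0 k by simp
qed



lemma pow_exp: "(Q::real) > 0 \<Longrightarrow> Q ^ a = exp (real a * ln Q)"
  by (simp add: exp_of_nat_mult)

lemma main_n:
  fixes tau M eps L :: real and t n k :: nat
  defines "q \<equiv> real CARD('a::{finite,field})"
  assumes q3: "q \<ge> 3" and tau: "0 \<le> tau" and tauk: "tau < (q - 1) / q"
    and H: "\<And>g k. 0 \<le> g \<Longrightarrow> g < q - 1 \<Longrightarrow> 0 \<le> k \<Longrightarrow> k < (q - 1) / q \<Longrightarrow> g + k = tau \<Longrightarrow>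
                  insdel_obj q g k \<le> M"
    and eps: "0 < eps" and teps: "real t * eps \<ge> 4" and t1: "t \<ge> 1"
    and L: "q^(t-1) \<le> L"
    and n: "n \<ge> 1" and kR: "real k \<le> (1 - M - eps) * real n" and kn: "k \<le> n"
    and big: "2 * (2 * real n + 1) * (real n + 1)^t \<le> q^n"
  shows "real (card {vs \<in> (indep_tuples n k :: 'a list list set). list_decodable n (lin_span n vs) tau L})
         \<ge> (1 - q powr (- real n)) * real (card (indep_tuples n k :: 'a list list set))"
proof -
  let ?T = "indep_tuples n k :: 'a list list set"
  define Ball where "Ball r = {c::'a list. length c = n \<and> real (insdel_dist r c) \<le> tau * real n}" for r :: "'a list"
  define beta where "beta = real (n+1) * exp (real n * M * ln q)"
  define CS where "CS = {cs::'a list list. set cs \<subseteq> {c. length c = k} \<and> length cs = t \<and> indep_fam k {..<t} ((!) cs)}"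
  define Rs where "Rs = {r::'a list. set r \<subseteq> UNIV \<and> length r \<le> 2 * n}"
  define S where "S r cs = {vs \<in> tuples n k. \<forall>i\<in>{..<t}. lc n vs (cs!i) \<in> Ball r}" for r cs
  define bad where "bad = {vs \<in> ?T. \<not> list_decodable n (lin_span n vs) tau L}"
  have q1: "q > 1" using q3 by simp
  have qC: "q = real CARD('a)" by (simp add: q_def)
  have "(q - 1) / q < 1" using q1 by simp
  then have tau1: "tau < 1" using tauk by linarith
  have finBall: "\<And>r. finite (Ball r)" unfolding Ball_def by simp
  have Ballsub: "\<And>r. Ball r \<subseteq> {c. length c = n}" unfolding Ball_def by auto
  have cBall: "\<And>r. real (card (Ball r)) \<le> beta"
    unfolding Ball_def beta_def q_def by (rule ball_bound) (use q3 tau tauk n H in \<open>auto simp: q_def\<close>)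
  have finRs: "finite Rs" unfolding Rs_def by (rule finite_lists_length_le) simp
  have finCS: "finite CS" unfolding CS_def
    by (rule finite_subset[of _ "{cs. set cs \<subseteq> {c::'a list. length c = k} \<and> length cs = t}"])
       (auto intro: finite_lists_length_eq)
  have finS: "\<And>r cs. finite (S r cs)" unfolding S_def by simp
  have cover: "bad \<subseteq> (\<Union>r\<in>Rs. \<Union>cs\<in>CS. S r cs)"
  proof
    fix vs assume vb: "vs \<in> bad"
    then have vsT: "vs \<in> ?T" and nd: "\<not> list_decodable n (lin_span n vs) tau L" unfolding bad_def by auto
    have vsl: "\<forall>v\<in>set vs. length v = n" "length vs = k" using vsT unfolding indep_tuples_def by auto
    obtain m :: nat and r :: "'a list" where mr: "real m \<le> real n + tau * real n" "length r = m"
      and big_list: "real (card (insdel_ball r (tau * real n) \<inter> lin_span n vs)) > L"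
      using nd unfolding list_decodable_def by (auto simp: not_le)
    have rl: "length r \<le> 2 * n"
    proof -
      have "tau * real n \<le> 1 * real n" by (rule mult_right_mono) (use tau1 in auto)
      then have "real m \<le> 2 * real n" using mr(1) by simp
      then show ?thesis using mr(2) by linarith
    qed
    define Y where "Y = {c::'a list. length c = k \<and> lc n vs c \<in> Ball r}"
    have finY: "finite Y" unfolding Y_def by simp
    have XY: "insdel_ball r (tau * real n) \<inter> lin_span n vs \<subseteq> lc n vs ` Y"
    proof
      fix x assume x: "x \<in> insdel_ball r (tau * real n) \<inter> lin_span n vs"
      then obtain c where c: "x = lc n vs c" "length c = length vs" using lin_span_lc[OF vsl(1)] by auto
      have "length x = n" using c by simp
      moreover have "real (insdel_dist r x) \<le> tau * real n" using x unfolding insdel_ball_def by auto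
      ultimately have "x \<in> Ball r" unfolding Ball_def by simp
      then show "x \<in> lc n vs ` Y" using c vsl unfolding Y_def by auto
    qed
    have "card (insdel_ball r (tau * real n) \<inter> lin_span n vs) \<le> card (lc n vs ` Y)"
      by (rule card_mono[OF _ XY]) (simp add: finY)
    also have "\<dots> \<le> card Y" by (rule card_image_le[OF finY])
    finally have "real (card Y) > L" using big_list by linarith
    then have "real (card Y) > q^(t-1)" using L by linarith
    moreover have "real (CARD('a)^(t-1)) = q^(t-1)" unfolding q_def by simp
    ultimately have "real (CARD('a)^(t-1)) < real (card Y)" by linarith
    then have "card Y > CARD('a)^(t-1)" by (simp only: of_nat_less_iff)
    then obtain cs where cs: "length cs = t" "set cs \<subseteq> Y" "indep_fam k {..<t} ((!) cs)"
      using greedy_indep[OF t1, of Y k] unfolding Y_def by auto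
    have csCS: "cs \<in> CS" using cs unfolding CS_def Y_def by auto
    have "vs \<in> S r cs"
    proof -
      have "\<forall>i\<in>{..<t}. lc n vs (cs!i) \<in> Ball r"
        using cs(1,2) unfolding Y_def by (auto dest!: nth_mem)
      moreover have "vs \<in> tuples n k" using vsl unfolding tuples_def by simp
      ultimately show ?thesis unfolding S_def by simp
    qed
    moreover have "r \<in> Rs" using rl unfolding Rs_def by simp
    ultimately show "vs \<in> (\<Union>r\<in>Rs. \<Union>cs\<in>CS. S r cs)" using csCS by blast
  qed
  have cS: "real (card (S r cs)) \<le> beta^t * q^(n*k) / q^(n*t)" if cs: "cs \<in> CS" for r cs
  proof -
    have csl: "\<forall>i\<in>{..<t}. length (cs!i) = k" using cs unfolding CS_def by (auto dest!: nth_mem)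
    have ind: "indep_fam k {..<t} ((!) cs)" using cs unfolding CS_def by simp
    have "card {vs \<in> tuples n k. \<forall>i\<in>{..<t}. lc n vs (cs!i) \<in> Ball r} * CARD('a)^(n * card {..<t})
           \<le> (\<Prod>i\<in>{..<t}. card (Ball r)) * CARD('a)^(n*k)"
      by (rule count_lemma) (use csl ind Ballsub in auto)
    then have "card (S r cs) * CARD('a)^(n * t) \<le> card (Ball r)^t * CARD('a)^(n*k)"
      unfolding S_def by simp
    then have "real (card (S r cs) * CARD('a)^(n * t)) \<le> real (card (Ball r)^t * CARD('a)^(n*k))"
      by (simp only: of_nat_le_iff)
    then have "real (card (S r cs)) * q^(n * t) \<le> real (card (Ball r))^t * q^(n*k)"
      unfolding q_def by simp
    also have "\<dots> \<le> beta^t * q^(n*k)"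
      using cBall[of r] q1 by (intro mult_right_mono power_mono) auto
    finally show ?thesis using q1 by (simp add: field_simps)
  qed
  have cRs: "real (card Rs) \<le> (2 * real n + 1) * q^(2*n)"
  proof -
    have "Rs \<subseteq> (\<Union>m\<in>{..2*n}. {r::'a list. length r = m})" unfolding Rs_def by auto
    then have "card Rs \<le> card (\<Union>m\<in>{..2*n}. {r::'a list. length r = m})" by (intro card_mono) auto
    also have "\<dots> \<le> (\<Sum>m\<in>{..2*n}. card {r::'a list. length r = m})" by (rule card_UN_le) simp
    also have "\<dots> = (\<Sum>m\<in>{..2*n}. CARD('a)^m)" by simp
    finally have "real (card Rs) \<le> real (\<Sum>m\<in>{..2*n}. CARD('a)^m)" by (simp only: of_nat_le_iff)
    also have "\<dots> = (\<Sum>m\<in>{..2*n}. q^m)" unfolding q_def by (simp add: of_nat_sum)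
    finally have "real (card Rs) \<le> (\<Sum>m\<in>{..2*n}. q^m)" .
    also have "\<dots> \<le> (\<Sum>m\<in>{..2*n}. q^(2*n))" using q1 by (intro sum_mono power_increasing) auto
    also have "\<dots> = (2 * real n + 1) * q^(2*n)" by simp
    finally show ?thesis .
  qed
  have cCS: "real (card CS) \<le> q^(k*t)"
  proof -
    have "card CS \<le> card {cs. set cs \<subseteq> {c::'a list. length c = k} \<and> length cs = t}"
      unfolding CS_def by (intro card_mono) (auto intro: finite_lists_length_eq)
    also have "\<dots> = (CARD('a)^k)^t" by (subst card_lists_length_eq) simp_all
    finally have "real (card CS) \<le> real ((CARD('a)^k)^t)" by (simp only: of_nat_le_iff)
    then show ?thesis unfolding q_def by (simp add: power_mult)
  qed
  have "real (card bad) \<le> real (card (\<Union>r\<in>Rs. \<Union>cs\<in>CS. S r cs))"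
    unfolding of_nat_le_iff by (rule card_mono[OF _ cover]) (use finRs finCS finS in auto)
  also have "\<dots> \<le> (\<Sum>r\<in>Rs. real (card (\<Union>cs\<in>CS. S r cs)))"
    unfolding of_nat_sum[symmetric] of_nat_le_iff by (rule card_UN_le[OF finRs])
  also have "\<dots> \<le> (\<Sum>r\<in>Rs. (\<Sum>cs\<in>CS. real (card (S r cs))))"
    by (intro sum_mono) (unfold of_nat_sum[symmetric] of_nat_le_iff, rule card_UN_le[OF finCS])
  also have "\<dots> \<le> (\<Sum>r\<in>Rs. (\<Sum>cs\<in>CS. beta^t * q^(n*k) / q^(n*t)))"
    by (intro sum_mono cS)
  also have "\<dots> = real (card Rs) * real (card CS) * (beta^t * q^(n*k) / q^(n*t))" by simp
  also have "\<dots> \<le> ((2 * real n + 1) * q^(2*n)) * q^(k*t) * (beta^t * q^(n*k) / q^(n*t))"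
    using cRs cCS q1 by (intro mult_right_mono mult_mono) (auto simp: beta_def)
  also have "\<dots> = (2 * real n + 1) * (real n + 1)^t * q^(n*k) *
        exp (ln q * (real (2*n) + real (k*t) - real (n*t) + real t * real n * M))"
  proof -
    have q0: "q > 0" using q1 by simp
    have bt: "beta^t = (real n + 1)^t * exp (real t * (real n * M * ln q))"
      unfolding beta_def by (simp add: power_mult_distrib exp_of_nat_mult add.commute)
    have "q^(2*n) * q^(k*t) * exp (real t * (real n * M * ln q)) / q^(n*t)
        = exp (real (2*n) * ln q) * exp (real (k*t) * ln q) * exp (real t * (real n * M * ln q)) / exp (real (n*t) * ln q)"
      by (simp only: pow_exp[OF q0])
    also have "\<dots> = exp (real (2*n) * ln q + real (k*t) * ln q + real t * (real n * M * ln q) - real (n*t) * ln q)"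
      by (simp only: exp_add exp_diff)
    also have "\<dots> = exp (ln q * (real (2*n) + real (k*t) - real (n*t) + real t * real n * M))"
      by (rule arg_cong[where f=exp]) (simp only: algebra_simps)
    finally have ee: "q^(2*n) * q^(k*t) * exp (real t * (real n * M * ln q)) / q^(n*t)
        = exp (ln q * (real (2*n) + real (k*t) - real (n*t) + real t * real n * M))" .
    have "((2 * real n + 1) * q^(2*n)) * q^(k*t) * (beta^t * q^(n*k) / q^(n*t))
        = (2 * real n + 1) * (real n + 1)^t * q^(n*k) * (q^(2*n) * q^(k*t) * exp (real t * (real n * M * ln q)) / q^(n*t))"
      unfolding bt by (simp add: algebra_simps)
    then show ?thesis unfolding ee .
  qed
  also have "\<dots> \<le> (2 * real n + 1) * (real n + 1)^t * q^(n*k) * exp (ln q * (- 2 * real n))"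
  proof -
    have "real (k*t) - real (n*t) + real t * real n * M = real t * (real k + real n * M - real n)"
      by (simp add: algebra_simps)
    also have "\<dots> \<le> real t * (- eps * real n)"
      using kR by (intro mult_left_mono) (auto simp: algebra_simps)
    also have "\<dots> = - (real t * eps) * real n" by simp
    also have "\<dots> \<le> - 4 * real n" using teps by (intro mult_right_mono) auto
    finally have "real (2*n) + real (k*t) - real (n*t) + real t * real n * M \<le> - 2 * real n" by simp
    then have "ln q * (real (2*n) + real (k*t) - real (n*t) + real t * real n * M) \<le> ln q * (- 2 * real n)"
      using q1 by (intro mult_left_mono) auto
    then show ?thesis using q1 by (intro mult_left_mono) auto
  qed
  also have "\<dots> = (2 * real n + 1) * (real n + 1)^t * q^(n*k) / q^(2*n)"
  proof -
    have "exp (ln q * (- 2 * real n)) = 1 / q^(2*n)"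
      using q1 by (simp add: pow_exp exp_minus[symmetric] divide_inverse algebra_simps)
    then show ?thesis by simp
  qed
  also have "\<dots> \<le> q^(n*k) / (2 * q^n)"
  proof -
    have "q^(2*n) = q^n * q^n" by (simp add: power_add[symmetric] mult_2)
    then have "(2 * real n + 1) * (real n + 1)^t * q^(n*k) / q^(2*n) = (2 * (2 * real n + 1) * (real n + 1)^t) * q^(n*k) / (2 * q^n * q^n)"
      using q1 by (simp add: field_simps)
    also have "\<dots> \<le> q^n * q^(n*k) / (2 * q^n * q^n)"
      using big q1 by (intro divide_right_mono mult_right_mono) auto
    also have "\<dots> = q^(n*k) / (2 * q^n)" using q1 by (simp add: field_simps)
    finally show ?thesis .
  qed
  also have "\<dots> \<le> real (card ?T) / q^n"
    using card_T_half[OF _ kn] q3 q1 unfolding q_def by (simp add: field_simps)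
  finally have cbad: "real (card bad) \<le> real (card ?T) / q^n" .
  have part: "card {vs \<in> ?T. list_decodable n (lin_span n vs) tau L} = card ?T - card bad"
  proof -
    have "?T = {vs \<in> ?T. list_decodable n (lin_span n vs) tau L} \<union> bad" unfolding bad_def by auto
    moreover have "{vs \<in> ?T. list_decodable n (lin_span n vs) tau L} \<inter> bad = {}" unfolding bad_def by auto
    ultimately have "card ?T = card {vs \<in> ?T. list_decodable n (lin_span n vs) tau L} + card bad"
      using card_Un_disjoint[of "{vs \<in> ?T. list_decodable n (lin_span n vs) tau L}" bad] unfolding bad_def by simp
    then show ?thesis by simp
  qed
  have badle: "card bad \<le> card ?T" unfolding bad_def by (intro card_mono) auto
  have "q powr (- real n) = 1 / q^n" using q1 by (simp add: powr_minus powr_realpow divide_inverse)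
  then have "(1 - q powr (- real n)) * real (card ?T) = real (card ?T) - real (card ?T) / q^n"
    by (simp add: algebra_simps)
  also have "\<dots> \<le> real (card ?T) - real (card bad)" using cbad by simp
  also have "\<dots> = real (card {vs \<in> ?T. list_decodable n (lin_span n vs) tau L})"
    unfolding part using badle by (simp add: of_nat_diff)
  finally show ?thesis .
qed



lemma eventually_big:
  fixes Q :: real assumes Q: "Q > 1"
  shows "eventually (\<lambda>n. 2 * (2 * real n + 1) * (real n + 1)^t \<le> Q^n) sequentially"
proof -
  have lim: "((\<lambda>n::nat. 4 * (real n + 1)^(Suc t) / Q^n) \<longlongrightarrow> 0) sequentially"
    using Q by real_asymp
  have "eventually (\<lambda>n. 4 * (real n + 1)^(Suc t) / Q^n < 1) sequentially"
    using order_tendstoD(2)[OF lim] by simp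
  then show ?thesis
  proof (rule eventually_mono)
    fix n :: nat assume h: "4 * (real n + 1)^(Suc t) / Q^n < 1"
    have Qn: "Q^n > 0" using Q by simp
    have "2 * (2 * real n + 1) * (real n + 1)^t \<le> 4 * (real n + 1) * (real n + 1)^t"
      by (intro mult_right_mono) auto
    also have "\<dots> = 4 * (real n + 1)^(Suc t)" by simp
    also have "\<dots> \<le> Q^n" using h Qn by (simp add: divide_less_eq)
    finally show "2 * (2 * real n + 1) * (real n + 1)^t \<le> Q^n" .
  qed
qed

theorem mainTheorem8:
  fixes tau gh kh :: real
  assumes q3: "CARD('a::{finite,field}) \<ge> 3"
    and tau: "tau \<ge> 0"
    and gh: "0 \<le> gh" "gh < real CARD('a) - 1"
    and kh: "0 \<le> kh" "kh < (real CARD('a) - 1) / real CARD('a)"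
    and sum: "gh + kh = tau"
    and maxim: "\<And>g k. 0 \<le> g \<Longrightarrow> g < real CARD('a) - 1 \<Longrightarrow> 0 \<le> k \<Longrightarrow>
                  k < (real CARD('a) - 1) / real CARD('a) \<Longrightarrow> g + k = tau \<Longrightarrow>
                  insdel_obj (real CARD('a)) g k \<le> insdel_obj (real CARD('a)) gh kh"
  shows "\<exists>C>0. \<exists>\<epsilon>0>0. \<forall>\<epsilon>. 0 < \<epsilon> \<and> \<epsilon> < \<epsilon>0 \<longrightarrow>
           (\<exists>N. \<forall>n\<ge>N.
             (let q = real CARD('a);
                  R = 1 - insdel_obj q gh kh - \<epsilon>;
                  k = nat \<lfloor>R * real n\<rfloor>;
                  T = (indep_tuples n k :: 'a list list set)
              in real (card {vs \<in> T. list_decodable n (lin_span n vs) tau (exp (C / \<epsilon>))})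
                   \<ge> (1 - q powr (- real n)) * real (card T)))"
proof -
  define q where "q = real CARD('a)"
  have q3': "q \<ge> 3" using q3 unfolding q_def by simp
  have q1: "q > 1" using q3' by simp
  define M where "M = insdel_obj q gh kh"
  have H: "\<And>g k. 0 \<le> g \<Longrightarrow> g < q - 1 \<Longrightarrow> 0 \<le> k \<Longrightarrow> k < (q - 1) / q \<Longrightarrow> g + k = tau \<Longrightarrow>
                  insdel_obj q g k \<le> M"
    using maxim unfolding q_def M_def by simp
  have tau_lt: "tau < q - 1 + (q - 1) / q" using gh kh sum unfolding q_def by simp
  have kh1: "kh < 1" using kh(2) q1 unfolding q_def by (smt (verit) divide_less_eq_1 q_def)
  have M0: "M \<ge> 0"
  proof -
    have "(2*gh - kh + 1) * Hq q (gh / (2*gh - kh + 1)) - gh * log q (q - 1) \<ge> 0"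
      using F1_nonneg[OF q1 kh(1) kh1 gh(1)] .
    moreover have "Hq q kh \<ge> 0" using Hq_nonneg[of q kh] q3' kh(1) kh1 by simp
    ultimately show ?thesis unfolding M_def insdel_obj_def by simp
  qed
  define C where "C = 4 * ln q"
  have C0: "C > 0" unfolding C_def using q1 by simp
  show ?thesis
  proof (rule exI[of _ C], rule conjI[OF C0], rule exI[of _ "1::real"], rule conjI, simp, intro allI impI)
    fix eps :: real assume eps: "0 < eps \<and> eps < 1"
    define t where "t = nat \<lceil>4 / eps\<rceil>"
    have t4: "real t * eps \<ge> 4"
    proof -
      have "real t \<ge> 4 / eps" unfolding t_def by linarith
      then show ?thesis using eps by (simp add: divide_le_eq mult.commute)
    qed
    have t1: "t \<ge> 1"
    proof -
      have "4 / eps > 0" using eps by simp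
      moreover have "4 / eps \<le> real_of_int \<lceil>4 / eps\<rceil>" by (rule le_of_int_ceiling)
      ultimately have "\<lceil>4 / eps\<rceil> \<ge> 1" by linarith
      then show ?thesis unfolding t_def by linarith
    qed
    have tL: "q^(t-1) \<le> exp (C / eps)"
    proof -
      have "real (t - 1) \<le> 4 / eps" unfolding t_def using t1 t_def by linarith
      then have "real (t - 1) * ln q \<le> 4 / eps * ln q" using q1 by (intro mult_right_mono) auto
      then have "exp (real (t - 1) * ln q) \<le> exp (C / eps)" unfolding C_def by simp
      then show ?thesis using pow_exp[of q "t - 1"] q1 by simp
    qed
    have L1: "exp (C / eps) \<ge> 1" using C0 eps by simp
    show "\<exists>N. \<forall>n\<ge>N.
             (let q = real CARD('a);
                  R = 1 - insdel_obj q gh kh - eps;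
                  k = nat \<lfloor>R * real n\<rfloor>;
                  T = (indep_tuples n k :: 'a list list set)
              in real (card {vs \<in> T. list_decodable n (lin_span n vs) tau (exp (C / eps))})
                   \<ge> (1 - q powr (- real n)) * real (card T))"
      unfolding Let_def q_def[symmetric] M_def[symmetric]
    proof (cases "M \<ge> 1")
      case True
      show "\<exists>N. \<forall>n\<ge>N. (1 - q powr (- real n)) * real (card (indep_tuples n (nat \<lfloor>(1 - M - eps) * real n\<rfloor>) :: 'a list list set))
            \<le> real (card {vs \<in> (indep_tuples n (nat \<lfloor>(1 - M - eps) * real n\<rfloor>) :: 'a list list set). list_decodable n (lin_span n vs) tau (exp (C / eps))})"
      proof (intro exI[of _ 0] allI impI)
        fix n :: nat
        have "(1 - M - eps) * real n \<le> 0" using True eps by (intro mult_nonpos_nonneg) auto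
        then have k0: "nat \<lfloor>(1 - M - eps) * real n\<rfloor> = 0" by simp
        show "(1 - q powr (- real n)) * real (card (indep_tuples n (nat \<lfloor>(1 - M - eps) * real n\<rfloor>) :: 'a list list set))
            \<le> real (card {vs \<in> (indep_tuples n (nat \<lfloor>(1 - M - eps) * real n\<rfloor>) :: 'a list list set). list_decodable n (lin_span n vs) tau (exp (C / eps))})"
          unfolding k0 q_def using main_k0[OF L1, of n tau, where 'a='a] by simp
      qed
    next
      case False
      then have M1: "M < 1" by simp
      have tauk: "tau < (q - 1) / q"
      proof (rule ccontr)
        assume "\<not> tau < (q - 1) / q"
        then have "M \<ge> 1" using M_ge_1[OF q3' _ tau_lt H] by simp
        then show False using M1 by simp
      qed
      obtain N0 where N0: "\<And>n. n \<ge> N0 \<Longrightarrow> 2 * (2 * real n + 1) * (real n + 1)^t \<le> q^n"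
        using eventually_big[OF q1, of t] unfolding eventually_sequentially by blast
      show "\<exists>N. \<forall>n\<ge>N. (1 - q powr (- real n)) * real (card (indep_tuples n (nat \<lfloor>(1 - M - eps) * real n\<rfloor>) :: 'a list list set))
            \<le> real (card {vs \<in> (indep_tuples n (nat \<lfloor>(1 - M - eps) * real n\<rfloor>) :: 'a list list set). list_decodable n (lin_span n vs) tau (exp (C / eps))})"
      proof (intro exI[of _ "max N0 1"] allI impI)
        fix n :: nat assume nN: "max N0 1 \<le> n"
        define k where "k = nat \<lfloor>(1 - M - eps) * real n\<rfloor>"
        have goal_k: "(1 - q powr (- real n)) * real (card (indep_tuples n k :: 'a list list set))
            \<le> real (card {vs \<in> (indep_tuples n k :: 'a list list set). list_decodable n (lin_span n vs) tau (exp (C / eps))})"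
        proof (cases "k = 0")
          case True
          then show ?thesis unfolding q_def using main_k0[OF L1, of n tau, where 'a='a] by simp
        next
          case False
          have kR: "real k \<le> (1 - M - eps) * real n"
          proof -
            have "\<lfloor>(1 - M - eps) * real n\<rfloor> \<ge> 1" using False unfolding k_def by linarith
            then have "real k = real_of_int \<lfloor>(1 - M - eps) * real n\<rfloor>" unfolding k_def by simp
            then show ?thesis by linarith
          qed
          have kn: "k \<le> n"
          proof -
            have "(1 - M - eps) * real n \<le> 1 * real n" using M0 eps by (intro mult_right_mono) auto
            then show ?thesis using kR by linarith
          qed
          show ?thesis unfolding q_def
            by (rule main_n[OF q3'[unfolded q_def] tau tauk[unfolded q_def] H[unfolded q_def] _ t4 t1 tL[unfolded q_def]])
               (use eps nN N0[of n] False kR kn q_def in auto)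
        qed
        then show "(1 - q powr (- real n)) * real (card (indep_tuples n (nat \<lfloor>(1 - M - eps) * real n\<rfloor>) :: 'a list list set))
            \<le> real (card {vs \<in> (indep_tuples n (nat \<lfloor>(1 - M - eps) * real n\<rfloor>) :: 'a list list set). list_decodable n (lin_span n vs) tau (exp (C / eps))})"
          unfolding k_def .
      qed
    qed
  qed
qed

end
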